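(* Let $T$ be a quantizable map satisfying Condition 1, $U=U_\Bbbk$ a quantization of $T$ on $\mathbb C^{N_\Bbbk}$, and $\psi_\Bbbk$ a normalized eigenvector of $U$. Fix the smoothed quantum partition $P_1,\dots,P_l$ described in the context. Let $\varepsilon=\varepsilon_0\dots\varepsilon_{m-1}\in\{1,\dots,l\}^m$. Then for every $n\geq1$, $$\hat\mu_\Bbbk([\![\varepsilon]\!])=\hat\mu_\Bbbk(T^{-n}[\![\varepsilon]\!])+R_{n,m},\qquad |R_{n,m}|\leq n\,C(m)\,\frac{\Lambda_{\max}^{m+n}}{N_\Bbbk},$$ where the constant $C(m)$ depends only on $m$ (for the fixed smoothed partition), and not on $n$, $N_\Bbbk$ or $\psi_\Bbbk$. The same statement holds with $\hat\mu_\Bbbk$ replaced by $\hat\mu^*_\Bbbk$.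
   Context: Condition 1: $T:[0,1]\to[0,1]$, integers $\Lambda_1,\dots,\Lambda_l\geq2$ with $\sum\Lambda_j^{-1}=1$, consecutive intervals $I_1,\dots,I_l$ with $|I_j|=\Lambda_j^{-1}$, $T$ affine with slope $\Lambda_j$ on $I_j$ mapping $I_j$ onto $[0,1]$; $\Lambda_{\max}=\max_j\Lambda_j$. Quantizable: there are partitions $\mathcal M_\Bbbk$ of $[0,1]$ into $E_i=[(i-1)/N_\Bbbk,i/N_\Bbbk]$ with $N_{\Bbbk+1}/N_\Bbbk$ an integer $>1$ and all endpoints of the $I_j$ among the endpoints of $\mathcal M_1$, and unitary $U_\Bbbk$ with $|U_\Bbbk(i,j)|^2=|E_j\cap T^{-1}E_i|/|E_j|$. $\mathrm{Op}_\Bbbk(f)$ is diagonal with $(i,i)$ entry $N_\Bbbk\int_{E_i}f\,dx$. Smoothed partition: for a fixed $\delta>0$, functions $\chi_1,\dots,\chi_l$, Lipschitz on the circle $[0,1]/(0\sim1)$, with $\chi_i=1$ on $[\beta_-(I_i)+\delta,\beta_+(I_i)-\delta]$ ($\beta_\mp$ the left/right endpoints of $I_i$), decaying to $0$ outside that interval, and $\sum_i\chi_i^2\equiv1$; $P_i=\mathrm{Op}_\Bbbk(\chi_i)$ and $P_i(j)=U^{-j}P_iU^j$. For a word $\varepsilon=\varepsilon_0\dots\varepsilon_{n-1}$ put $P_\varepsilon=P_{\varepsilon_{n-1}}(n-1)\cdots P_{\varepsilon_1}(1)P_{\varepsilon_0}(0)$, $\hat\mu_\Bbbk([\![\varepsilon]\!])=\|P_\varepsilon\psi_\Bbbk\|^2$,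 $\hat\mu^*_\Bbbk([\![\varepsilon]\!])=\|P^*_\varepsilon\psi_\Bbbk\|^2$. For $|\varepsilon|=m$ define $\hat\mu_\Bbbk(T^{-n}[\![\varepsilon]\!])=\sum_{|\varepsilon'|=n}\hat\mu_\Bbbk([\![\varepsilon'\varepsilon]\!])$ (concatenated words), and similarly for $\hat\mu^*_\Bbbk$. *)

theory Defs
  imports "HOL-Analysis.Analysis" "Jordan_Normal_Form.Schur_Decomposition"
begin

definition beta_lo :: "(nat \<Rightarrow> nat) \<Rightarrow> nat \<Rightarrow> real" where
  "beta_lo \<Lambda> j = (\<Sum>i\<in>{1..<j}. 1 / real (\<Lambda> i))"

definition beta_hi :: "(nat \<Rightarrow> nat) \<Rightarrow> nat \<Rightarrow> real" where
  "beta_hi \<Lambda> j = beta_lo \<Lambda> j + 1 / real (\<Lambda> j)"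

definition condition1 :: "(real \<Rightarrow> real) \<Rightarrow> nat \<Rightarrow> (nat \<Rightarrow> nat) \<Rightarrow> bool" where
  "condition1 T l \<Lambda> \<longleftrightarrow>
     (\<forall>j\<in>{1..l}. \<Lambda> j \<ge> 2) \<and>
     (\<Sum>j\<in>{1..l}. 1 / real (\<Lambda> j)) = 1 \<and>
     (\<forall>x\<in>{0..1}. T x \<in> {0..1}) \<and>
     (\<forall>j\<in>{1..l}. \<forall>x\<in>{beta_lo \<Lambda> j<..<beta_hi \<Lambda> j}.
         T x = real (\<Lambda> j) * (x - beta_lo \<Lambda> j))"

definition Lambda_max :: "nat \<Rightarrow> (nat \<Rightarrow> nat) \<Rightarrow> nat" where
  "Lambda_max l \<Lambda> = Max (\<Lambda> ` {1..l})"

(* Cell E_{i+1} = [i/N, (i+1)/N] of the partition M_k (0-based index i < N) *)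
definition cell :: "nat \<Rightarrow> nat \<Rightarrow> real set" where
  "cell N i = {real i / real N .. real (i + 1) / real N}"

definition unitary_mat :: "nat \<Rightarrow> complex mat \<Rightarrow> bool" where
  "unitary_mat N U \<longleftrightarrow> U \<in> carrier_mat N N \<and>
     mat_adjoint U * U = 1\<^sub>m N \<and> U * mat_adjoint U = 1\<^sub>m N"

definition quantization :: "(real \<Rightarrow> real) \<Rightarrow> nat \<Rightarrow> (nat \<Rightarrow> nat) \<Rightarrow>
    (nat \<Rightarrow> nat) \<Rightarrow> (nat \<Rightarrow> complex mat) \<Rightarrow> bool" where
  "quantization T l \<Lambda> N U \<longleftrightarrow>
     (\<forall>k\<ge>1. N k > 0 \<and> N k dvd N (Suc k) \<and> N k < N (Suc k)) \<and>
     (\<forall>j\<in>{1..l}. (\<exists>i::nat. beta_lo \<Lambda> j = real i / real (N 1)) \<and>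
                 (\<exists>i::nat. beta_hi \<Lambda> j = real i / real (N 1))) \<and>
     (\<forall>k\<ge>1. unitary_mat (N k) (U k) \<and>
        (\<forall>i<N k. \<forall>j<N k. (cmod (U k $$ (i, j)))\<^sup>2 =
            measure lebesgue (cell (N k) j \<inter> T -` cell (N k) i) / (1 / real (N k))))"

(* Smoothed partition chi_1..chi_l, functions on the circle R/Z given as 1-periodic functions *)
definition smoothed_partition :: "nat \<Rightarrow> (nat \<Rightarrow> nat) \<Rightarrow> real \<Rightarrow> (nat \<Rightarrow> real \<Rightarrow> real) \<Rightarrow> bool" where
  "smoothed_partition l \<Lambda> \<delta> chi \<longleftrightarrow>
     \<delta> > 0 \<and>
     (\<forall>i\<in>{1..l}. (\<forall>x. chi i (x + 1) = chi i x) \<and>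
        (\<exists>L. \<forall>x y. \<bar>chi i x - chi i y\<bar> \<le> L * \<bar>x - y\<bar>) \<and>
        (\<forall>x\<in>{beta_lo \<Lambda> i + \<delta> .. beta_hi \<Lambda> i - \<delta>}. chi i x = 1) \<and>
        (\<forall>x. (\<forall>z::int. x + real_of_int z \<notin> {beta_lo \<Lambda> i - \<delta> .. beta_hi \<Lambda> i + \<delta>})
               \<longrightarrow> chi i x = 0)) \<and>
     (\<forall>x. (\<Sum>i\<in>{1..l}. (chi i x)\<^sup>2) = 1)"

definition Op :: "nat \<Rightarrow> (real \<Rightarrow> real) \<Rightarrow> complex mat" where
  "Op N f = mat N N (\<lambda>(i, j). if i = j then complex_of_real (real N * integral (cell N i) f) else 0)"

definition Pt :: "nat \<Rightarrow> complex mat \<Rightarrow> (nat \<Rightarrow> real \<Rightarrow> real) \<Rightarrow> nat \<Rightarrow> nat \<Rightarrow> complex mat" where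
  "Pt N U chi a j = (mat_adjoint U ^\<^sub>m j) * Op N (chi a) * (U ^\<^sub>m j)"

(* Pw_from j [e_j, ..., e_{n-1}] = P_{e_{n-1}}(n-1) ... P_{e_j}(j) *)
fun Pw_from :: "nat \<Rightarrow> complex mat \<Rightarrow> (nat \<Rightarrow> real \<Rightarrow> real) \<Rightarrow> nat \<Rightarrow> nat list \<Rightarrow> complex mat" where
  "Pw_from N U chi j [] = 1\<^sub>m N"
| "Pw_from N U chi j (a # \<epsilon>) = Pw_from N U chi (Suc j) \<epsilon> * Pt N U chi a j"

definition Pword :: "nat \<Rightarrow> complex mat \<Rightarrow> (nat \<Rightarrow> real \<Rightarrow> real) \<Rightarrow> nat list \<Rightarrow> complex mat" where
  "Pword N U chi \<epsilon> = Pw_from N U chi 0 \<epsilon>"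

definition sqnorm :: "complex vec \<Rightarrow> real" where
  "sqnorm v = (\<Sum>i<dim_vec v. (cmod (v $ i))\<^sup>2)"

definition words :: "nat \<Rightarrow> nat \<Rightarrow> nat list set" where
  "words l n = {xs. set xs \<subseteq> {1..l} \<and> length xs = n}"

definition mu_hat :: "nat \<Rightarrow> complex mat \<Rightarrow> (nat \<Rightarrow> real \<Rightarrow> real) \<Rightarrow> complex vec \<Rightarrow> nat list \<Rightarrow> real" where
  "mu_hat N U chi \<psi> \<epsilon> = sqnorm (Pword N U chi \<epsilon> *\<^sub>v \<psi>)"

definition mu_hat_star :: "nat \<Rightarrow> complex mat \<Rightarrow> (nat \<Rightarrow> real \<Rightarrow> real) \<Rightarrow> complex vec \<Rightarrow> nat list \<Rightarrow> real" where
  "mu_hat_star N U chi \<psi> \<epsilon> = sqnorm (mat_adjoint (Pword N U chi \<epsilon>) *\<^sub>v \<psi>)"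

(* hat mu_k(T^{-n}[[eps]]) = sum over words eps' of length n of hat mu_k([[eps' eps]]) *)
definition mu_hat_pull :: "nat \<Rightarrow> nat \<Rightarrow> complex mat \<Rightarrow> (nat \<Rightarrow> real \<Rightarrow> real) \<Rightarrow> complex vec \<Rightarrow> nat \<Rightarrow> nat list \<Rightarrow> real" where
  "mu_hat_pull l N U chi \<psi> n \<epsilon> = (\<Sum>\<epsilon>'\<in>words l n. mu_hat N U chi \<psi> (\<epsilon>' @ \<epsilon>))"

definition mu_hat_star_pull :: "nat \<Rightarrow> nat \<Rightarrow> complex mat \<Rightarrow> (nat \<Rightarrow> real \<Rightarrow> real) \<Rightarrow> complex vec \<Rightarrow> nat \<Rightarrow> nat list \<Rightarrow> real" where
  "mu_hat_star_pull l N U chi \<psi> n \<epsilon> = (\<Sum>\<epsilon>'\<in>words l n. mu_hat_star N U chi \<psi> (\<epsilon>' @ \<epsilon>))"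

end

theory Submission
  imports Defs
begin


lemma mult_entry:
  assumes "A \<in> carrier_mat n n" "B \<in> carrier_mat n n" "i < n" "j < n"
  shows "(A * B) $$ (i,j) = (\<Sum>k<n. A $$ (i,k) * B $$ (k,j))"
  using assms by (auto simp: scalar_prod_def atLeast0LessThan intro!: sum.cong)

lemma mult_vec_entry:
  assumes "A \<in> carrier_mat n n" "v \<in> carrier_vec n" "i < n"
  shows "(A *\<^sub>v v) $ i = (\<Sum>k<n. A $$ (i,k) * v $ k)"
  using assms by (auto simp: scalar_prod_def atLeast0LessThan intro!: sum.cong)

lemma adj_dim[simp]: "dim_row (mat_adjoint A) = dim_col A" "dim_col (mat_adjoint A) = dim_row A"
  unfolding mat_adjoint_def by (auto simp: mat_of_rows_def)

lemma adj_carrier[simp]: "A \<in> carrier_mat n m \<Longrightarrow> mat_adjoint A \<in> carrier_mat m n"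
  unfolding mat_adjoint_def by auto

lemma adj_entry'[simp]:
  assumes "i < dim_col A" "j < dim_row A"
  shows "mat_adjoint A $$ (i,j) = cnj (A $$ (j,i))"
  using assms unfolding mat_adjoint_def by (auto simp: mat_of_rows_def cols_def)

lemma adj_entry:
  assumes "A \<in> carrier_mat n m" "i < m" "j < n"
  shows "mat_adjoint A $$ (i,j) = cnj (A $$ (j,i))"
  using assms by auto

lemma adj_mult:
  fixes A B :: "complex mat"
  assumes "A \<in> carrier_mat n n" "B \<in> carrier_mat n n"
  shows "mat_adjoint (A * B) = mat_adjoint B * mat_adjoint A"
proof (rule eq_matI)
  fix i j assume ij: "i < dim_row (mat_adjoint B * mat_adjoint A)" "j < dim_col (mat_adjoint B * mat_adjoint A)"
  then have i: "i < n" and j: "j < n" using assms by auto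
  show "mat_adjoint (A * B) $$ (i, j) = (mat_adjoint B * mat_adjoint A) $$ (i, j)"
  proof -
    have "mat_adjoint (A * B) $$ (i, j) = cnj ((A * B) $$ (j, i))" using assms i j by simp
    also have "\<dots> = (\<Sum>k<n. cnj (B $$ (k,i)) * cnj (A $$ (j,k)))"
      using mult_entry[OF assms j i] by (simp add: mult.commute del: index_mult_mat)
    also have "\<dots> = (mat_adjoint B * mat_adjoint A) $$ (i, j)"
      using assms i j by (subst mult_entry[of _ n]) auto
    finally show ?thesis .
  qed
qed (use assms in auto)

lemma adj_adj: fixes A :: "complex mat" assumes "A \<in> carrier_mat n m" shows "mat_adjoint (mat_adjoint A) = A"
  by (rule eq_matI) (use assms in \<open>auto simp: carrier_matD\<close>)

lemma adj_minus:
  fixes A B :: "complex mat"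
  assumes "A \<in> carrier_mat n n" "B \<in> carrier_mat n n"
  shows "mat_adjoint (A - B) = mat_adjoint A - mat_adjoint B"
  by (rule eq_matI) (use assms in \<open>auto simp: carrier_matD\<close>)

lemma adj_one[simp]: "mat_adjoint (1\<^sub>m n :: complex mat) = 1\<^sub>m n"
  by (rule eq_matI) (auto simp: adj_entry)

definition vn :: "complex vec \<Rightarrow> real" where "vn v = sqrt (sqnorm v)"
definition ip :: "complex vec \<Rightarrow> complex vec \<Rightarrow> complex" where
  "ip u v = (\<Sum>i<dim_vec v. cnj (u $ i) * v $ i)"

lemma sqnorm_nonneg[simp]: "0 \<le> sqnorm v" unfolding sqnorm_def by (auto intro: sum_nonneg)
lemma vn_nonneg[simp]: "0 \<le> vn v" unfolding vn_def by auto
lemma vn_sq: "(vn v)^2 = sqnorm v" unfolding vn_def by simp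

lemma vn_L2: "vn v = L2_set (\<lambda>i. cmod (v $ i)) {..<dim_vec v}"
  unfolding vn_def sqnorm_def L2_set_def by simp

lemma ip_self: "ip v v = of_real (sqnorm v)"
  unfolding ip_def sqnorm_def
  by (simp add: complex_norm_square[symmetric] mult.commute)

lemma cs: assumes "dim_vec u = dim_vec v" shows "cmod (ip u v) \<le> vn u * vn v"
proof -
  have "cmod (ip u v) \<le> (\<Sum>i<dim_vec v. cmod (cnj (u $ i) * v $ i))"
    unfolding ip_def by (rule norm_sum)
  also have "\<dots> = (\<Sum>i<dim_vec v. \<bar>cmod (u $ i)\<bar> * \<bar>cmod (v $ i)\<bar>)"
    by (simp add: norm_mult)
  also have "\<dots> \<le> L2_set (\<lambda>i. cmod (u $ i)) {..<dim_vec v} * L2_set (\<lambda>i. cmod (v $ i)) {..<dim_vec v}"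
    by (rule L2_set_mult_ineq)
  finally show ?thesis using assms by (simp add: vn_L2)
qed

lemma vn_triangle: assumes "dim_vec u = dim_vec v" shows "vn (u + v) \<le> vn u + vn v"
proof -
  have "vn (u + v) = L2_set (\<lambda>i. cmod (u $ i + v $ i)) {..<dim_vec v}"
    using assms unfolding vn_L2 by (auto intro!: L2_set_cong)
  also have "\<dots> \<le> L2_set (\<lambda>i. cmod (u $ i) + cmod (v $ i)) {..<dim_vec v}"
    by (rule L2_set_mono) (auto simp: norm_triangle_ineq)
  also have "\<dots> \<le> L2_set (\<lambda>i. cmod (u $ i)) {..<dim_vec v} + L2_set (\<lambda>i. cmod (v $ i)) {..<dim_vec v}"
    by (rule L2_set_triangle_ineq)
  finally show ?thesis using assms by (simp add: vn_L2)
qed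

lemma vn_minus: assumes "dim_vec u = dim_vec v" shows "vn (u - v) \<le> vn u + vn v"
proof -
  have "u - v = u + (- v)" using assms by (auto intro!: eq_vecI)
  moreover have "vn (- v) = vn v" unfolding vn_L2 by (auto intro!: L2_set_cong)
  ultimately show ?thesis using vn_triangle[of u "- v"] assms by simp
qed

lemma sqnorm_smult: "sqnorm (c \<cdot>\<^sub>v v) = (cmod c)^2 * sqnorm v"
  unfolding sqnorm_def by (simp add: norm_mult power_mult_distrib sum_distrib_left)

definition opb :: "nat \<Rightarrow> complex mat \<Rightarrow> real \<Rightarrow> bool" where
  "opb n A c \<longleftrightarrow> A \<in> carrier_mat n n \<and> 0 \<le> c \<and> (\<forall>v\<in>carrier_vec n. vn (A *\<^sub>v v) \<le> c * vn v)"

lemma opbD: "opb n A c \<Longrightarrow> v \<in> carrier_vec n \<Longrightarrow> vn (A *\<^sub>v v) \<le> c * vn v"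
  unfolding opb_def by auto

lemma opb_carrier: "opb n A c \<Longrightarrow> A \<in> carrier_mat n n" unfolding opb_def by auto
lemma opb_nonneg: "opb n A c \<Longrightarrow> 0 \<le> c" unfolding opb_def by auto

lemma opb_mono: "opb n A c \<Longrightarrow> c \<le> d \<Longrightarrow> opb n A d"
  unfolding opb_def by (meson mult_right_mono order_trans vn_nonneg)

lemma opb_mult: assumes "opb n A a" "opb n B b" shows "opb n (A * B) (a * b)"
proof -
  have A: "A \<in> carrier_mat n n" and B: "B \<in> carrier_mat n n" using assms opb_carrier by auto
  show ?thesis unfolding opb_def
  proof (intro conjI ballI)
    fix v :: "complex vec" assume v: "v \<in> carrier_vec n"
    have "vn ((A * B) *\<^sub>v v) = vn (A *\<^sub>v (B *\<^sub>v v))" using A B v by simp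
    also have "\<dots> \<le> a * vn (B *\<^sub>v v)" using assms(1) B v by (intro opbD) auto
    also have "\<dots> \<le> a * (b * vn v)" using assms opbD[OF assms(2) v] by (intro mult_left_mono) (auto simp: opb_def)
    finally show "vn ((A * B) *\<^sub>v v) \<le> a * b * vn v" by simp
  qed (use A B assms in \<open>auto simp: opb_def\<close>)
qed

lemma opb_add: assumes "opb n A a" "opb n B b" shows "opb n (A + B) (a + b)"
proof -
  have A: "A \<in> carrier_mat n n" and B: "B \<in> carrier_mat n n" using assms opb_carrier by auto
  show ?thesis unfolding opb_def
  proof (intro conjI ballI)
    fix v :: "complex vec" assume v: "v \<in> carrier_vec n"
    have "vn ((A + B) *\<^sub>v v) = vn (A *\<^sub>v v + B *\<^sub>v v)" using A B v by (simp add: add_mult_distrib_mat_vec)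
    also have "\<dots> \<le> vn (A *\<^sub>v v) + vn (B *\<^sub>v v)" using A B by (intro vn_triangle) auto
    also have "\<dots> \<le> a * vn v + b * vn v" using opbD[OF assms(1) v] opbD[OF assms(2) v] by simp
    finally show "vn ((A + B) *\<^sub>v v) \<le> (a + b) * vn v" by (simp add: algebra_simps)
  qed (use A B assms in \<open>auto simp: opb_def\<close>)
qed

lemma opb_minus: assumes "opb n A a" "opb n B b" shows "opb n (A - B) (a + b)"
proof -
  have A: "A \<in> carrier_mat n n" and B: "B \<in> carrier_mat n n" using assms opb_carrier by auto
  show ?thesis unfolding opb_def
  proof (intro conjI ballI)
    fix v :: "complex vec" assume v: "v \<in> carrier_vec n"
    have "vn ((A - B) *\<^sub>v v) = vn (A *\<^sub>v v - B *\<^sub>v v)" using A B v by (simp add: minus_mult_distrib_mat_vec)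
    also have "\<dots> \<le> vn (A *\<^sub>v v) + vn (B *\<^sub>v v)" using A B by (intro vn_minus) auto
    also have "\<dots> \<le> a * vn v + b * vn v" using opbD[OF assms(1) v] opbD[OF assms(2) v] by simp
    finally show "vn ((A - B) *\<^sub>v v) \<le> (a + b) * vn v" by (simp add: algebra_simps)
  qed (use A B assms in \<open>auto simp: opb_def\<close>)
qed

lemma ip_adj:
  assumes "A \<in> carrier_mat n n" "u \<in> carrier_vec n" "v \<in> carrier_vec n"
  shows "ip (A *\<^sub>v u) v = ip u (mat_adjoint A *\<^sub>v v)"
proof -
  have "ip (A *\<^sub>v u) v = (\<Sum>i<n. \<Sum>k<n. cnj (A $$ (i,k)) * cnj (u $ k) * v $ i)"
    using assms unfolding ip_def
    by (simp add: mult_vec_entry[where n=n] sum_distrib_right mult.assoc del: index_mult_mat_vec)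
  also have "\<dots> = (\<Sum>k<n. \<Sum>i<n. cnj (A $$ (i,k)) * cnj (u $ k) * v $ i)"
    by (rule sum.swap)
  also have "\<dots> = ip u (mat_adjoint A *\<^sub>v v)"
    using assms unfolding ip_def
    by (simp add: mult_vec_entry[where n=n] sum_distrib_left mult.assoc mult.left_commute del: index_mult_mat_vec)
  finally show ?thesis .
qed

lemma ip_smult_left: assumes "dim_vec u = dim_vec v" shows "ip (c \<cdot>\<^sub>v u) v = cnj c * ip u v"
  unfolding ip_def using assms by (simp add: sum_distrib_left mult.assoc)

lemma ip_smult_right: "ip u (c \<cdot>\<^sub>v v) = c * ip u v"
  unfolding ip_def by (simp add: sum_distrib_left mult.left_commute)

lemma sqnorm_ip: "sqnorm v = Re (ip v v)" by (simp add: ip_self)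

lemma ip_minus: assumes "dim_vec a = dim_vec b" shows "ip v (a - b) = ip v a - ip v b"
  using assms unfolding ip_def by (simp add: right_diff_distrib sum_subtractf)

lemma opb_adj: assumes "opb n A c" shows "opb n (mat_adjoint A) c"
proof -
  have A: "A \<in> carrier_mat n n" and c: "0 \<le> c" using assms by (auto simp: opb_def)
  show ?thesis unfolding opb_def
  proof (intro conjI ballI)
    fix v :: "complex vec" assume v: "v \<in> carrier_vec n"
    define w where "w = mat_adjoint A *\<^sub>v v"
    have w: "w \<in> carrier_vec n" using A v unfolding w_def by (intro mult_mat_vec_carrier[of _ n n]) auto
    have e1: "(vn w)^2 = Re (ip w w)" by (simp only: vn_sq sqnorm_ip)
    have e2: "ip w w = ip (A *\<^sub>v w) v"
      using ip_adj[OF A w v] unfolding w_def by (rule sym)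
    have "Re (ip (A *\<^sub>v w) v) \<le> cmod (ip (A *\<^sub>v w) v)" by (rule complex_Re_le_cmod)
    also have "\<dots> \<le> vn (A *\<^sub>v w) * vn v" using A v w by (intro cs) simp
    also have "\<dots> \<le> (c * vn w) * vn v" using opbD[OF assms w] by (intro mult_right_mono) auto
    finally have *: "(vn w)^2 \<le> c * vn v * vn w" using e1 e2 by (simp only: mult_ac)
    have "vn w \<le> c * vn v"
    proof (cases "vn w = 0")
      case True then show ?thesis using c by simp
    next
      case False then have "vn w > 0" using vn_nonneg[of w] by linarith
      moreover have "vn w * vn w \<le> (c * vn v) * vn w" using * unfolding power2_eq_square .
      ultimately show ?thesis by (rule mult_right_le_imp_le[rotated])
    qed
    then show "vn (mat_adjoint A *\<^sub>v v) \<le> c * vn v" unfolding w_def .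
  qed (use A c in simp_all)
qed

lemma unitary_norm:
  assumes "unitary_mat n U" "v \<in> carrier_vec n"
  shows "sqnorm (U *\<^sub>v v) = sqnorm v"
proof -
  have U: "U \<in> carrier_mat n n" and UU: "mat_adjoint U * U = 1\<^sub>m n" using assms unitary_mat_def by auto
  have "ip (U *\<^sub>v v) (U *\<^sub>v v) = ip v (mat_adjoint U *\<^sub>v (U *\<^sub>v v))"
    using U assms by (intro ip_adj) auto
  also have "mat_adjoint U *\<^sub>v (U *\<^sub>v v) = (mat_adjoint U * U) *\<^sub>v v"
    using U assms by (subst assoc_mult_mat_vec) auto
  finally have "ip (U *\<^sub>v v) (U *\<^sub>v v) = ip v v" using UU assms by simp
  then show ?thesis by (simp add: ip_self)
qed

lemma unitary_adj: assumes "unitary_mat n U" shows "unitary_mat n (mat_adjoint U)"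
  using assms unfolding unitary_mat_def by (auto simp: adj_adj)

lemma opb_unitary: assumes "unitary_mat n U" shows "opb n U 1"
  using assms unitary_norm[OF assms] unfolding opb_def unitary_mat_def vn_def by auto

definition dmat :: "nat \<Rightarrow> (nat \<Rightarrow> complex) \<Rightarrow> complex mat" where
  "dmat n d = mat n n (\<lambda>(i,j). if i = j then d i else 0)"

lemma dmat_carrier[simp]: "dmat n d \<in> carrier_mat n n" unfolding dmat_def by auto
lemma dmat_dims[simp]: "dim_row (dmat n d) = n" "dim_col (dmat n d) = n" unfolding dmat_def by auto

lemma dmat_vec: assumes "v \<in> carrier_vec n" "i < n" shows "(dmat n d *\<^sub>v v) $ i = d i * v $ i"
proof -
  have "(dmat n d *\<^sub>v v) $ i = (\<Sum>k<n. dmat n d $$ (i,k) * v $ k)"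
    using assms by (intro mult_vec_entry) auto
  also have "\<dots> = (\<Sum>k\<in>{i}. d i * v $ k)"
    using assms by (intro sum.mono_neutral_cong_right) (auto simp: dmat_def)
  finally show ?thesis by simp
qed

lemma sqnorm_dmat: assumes "v \<in> carrier_vec n"
  shows "sqnorm (dmat n d *\<^sub>v v) = (\<Sum>i<n. (cmod (d i))^2 * (cmod (v $ i))^2)"
  unfolding sqnorm_def using assms by (simp add: dmat_vec norm_mult power_mult_distrib del: index_mult_mat_vec)

lemma opb_dmat: assumes "\<And>i. i < n \<Longrightarrow> cmod (d i) \<le> c" "0 \<le> c"
  shows "opb n (dmat n d) c"
  unfolding opb_def
proof (intro conjI ballI)
  fix v :: "complex vec" assume v: "v \<in> carrier_vec n"
  have "sqnorm (dmat n d *\<^sub>v v) \<le> (\<Sum>i<n. c^2 * (cmod (v $ i))^2)"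
    unfolding sqnorm_dmat[OF v]
    by (intro sum_mono mult_right_mono power_mono) (use assms in auto)
  also have "\<dots> = c^2 * sqnorm v" using v by (simp add: sqnorm_def sum_distrib_left)
  finally have "sqrt (sqnorm (dmat n d *\<^sub>v v)) \<le> sqrt (c^2 * sqnorm v)" by simp
  then show "vn (dmat n d *\<^sub>v v) \<le> c * vn v" using assms by (simp add: vn_def real_sqrt_mult)
qed (use assms in auto)

lemma dmat_minus: "dmat n d - dmat n e = dmat n (\<lambda>i. d i - e i)"
  by (rule eq_matI) (auto simp: dmat_def)

lemma dmat_mult: "dmat n d * dmat n e = dmat n (\<lambda>i. d i * e i)"
proof (rule eq_matI)
  fix i j assume "i < dim_row (dmat n (\<lambda>i. d i * e i))" "j < dim_col (dmat n (\<lambda>i. d i * e i))"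
  then have ij: "i < n" "j < n" by (auto simp: dmat_def)
  have "(dmat n d * dmat n e) $$ (i,j) = (\<Sum>k<n. dmat n d $$ (i,k) * dmat n e $$ (k,j))"
    using ij by (intro mult_entry) auto
  also have "\<dots> = (\<Sum>k\<in>{i}. dmat n d $$ (i,k) * dmat n e $$ (k,j))"
    using ij by (intro sum.mono_neutral_cong_right) (auto simp: dmat_def)
  finally show "(dmat n d * dmat n e) $$ (i,j) = dmat n (\<lambda>i. d i * e i) $$ (i,j)"
    using ij by (simp add: dmat_def)
qed (auto simp: dmat_def)

lemma dmat_adj: assumes "\<And>i. cnj (d i) = d i" shows "mat_adjoint (dmat n d) = dmat n d"
  by (rule eq_matI) (auto simp: dmat_def assms)

lemma dmat_one: "dmat n (\<lambda>i. 1) = 1\<^sub>m n"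
  by (rule eq_matI) (auto simp: dmat_def)

definition qf :: "complex vec \<Rightarrow> complex mat \<Rightarrow> complex" where
  "qf v A = ip v (A *\<^sub>v v)"

lemma qf_diff:
  assumes "opb n (A - B) c" "v \<in> carrier_vec n" "A \<in> carrier_mat n n" "B \<in> carrier_mat n n"
  shows "cmod (qf v A - qf v B) \<le> c * (vn v)^2"
proof -
  have "qf v A - qf v B = ip v ((A - B) *\<^sub>v v)"
    unfolding qf_def using assms by (simp add: minus_mult_distrib_mat_vec ip_minus)
  also have "cmod \<dots> \<le> vn v * vn ((A - B) *\<^sub>v v)" using assms by (intro cs) auto
  also have "\<dots> \<le> vn v * (c * vn v)" using opbD[OF assms(1,2)] by (intro mult_left_mono) auto
  finally show ?thesis by (simp add: power2_eq_square algebra_simps)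
qed

lemma sqnorm_qf:
  assumes "A \<in> carrier_mat n n" "v \<in> carrier_vec n"
  shows "of_real (sqnorm (A *\<^sub>v v)) = qf v (mat_adjoint A * A)"
proof -
  have "of_real (sqnorm (A *\<^sub>v v)) = ip (A *\<^sub>v v) (A *\<^sub>v v)" by (simp add: ip_self)
  also have "\<dots> = ip v (mat_adjoint A *\<^sub>v (A *\<^sub>v v))" using assms by (intro ip_adj) auto
  also have "\<dots> = qf v (mat_adjoint A * A)" unfolding qf_def using assms
    by (subst assoc_mult_mat_vec[where n\<^sub>1=n and n\<^sub>2=n and n\<^sub>3=n]) auto
  finally show ?thesis .
qed


definition phi :: "nat \<Rightarrow> (nat \<Rightarrow> nat \<Rightarrow> real) \<Rightarrow> nat set \<Rightarrow> complex mat \<Rightarrow> complex mat" where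
  "phi n p S X = mat n n (\<lambda>(i,j). \<Sum>a\<in>S. of_real (p a i) * X $$ (i,j) * of_real (p a j))"

definition Pd :: "nat \<Rightarrow> (nat \<Rightarrow> nat \<Rightarrow> real) \<Rightarrow> nat \<Rightarrow> complex mat" where
  "Pd n p a = dmat n (\<lambda>i. of_real (p a i))"

lemma phi_carrier[simp]: "phi n p S X \<in> carrier_mat n n" unfolding phi_def by auto
lemma phi_dims[simp]: "dim_row (phi n p S X) = n" "dim_col (phi n p S X) = n" unfolding phi_def by auto
lemma Pd_carrier[simp]: "Pd n p a \<in> carrier_mat n n" unfolding Pd_def by auto
lemma Pd_dims[simp]: "dim_row (Pd n p a) = n" "dim_col (Pd n p a) = n" unfolding Pd_def by auto

lemma phi_minus:
  assumes "X \<in> carrier_mat n n" "Y \<in> carrier_mat n n"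
  shows "phi n p S (X - Y) = phi n p S X - phi n p S Y"
  by (rule eq_matI) (use assms in \<open>auto simp: phi_def algebra_simps sum_subtractf\<close>)

lemma phi_dmat:
  "phi n p S (dmat n d) = dmat n (\<lambda>i. of_real (\<Sum>a\<in>S. (p a i)^2) * d i)"
  by (rule eq_matI) (auto simp: phi_def dmat_def sum_distrib_right sum_distrib_left power2_eq_square algebra_simps)

lemma phi_single:
  assumes "X \<in> carrier_mat n n"
  shows "Pd n p a * X * Pd n p a = phi n p {a} X"
proof (rule eq_matI)
  fix i j assume "i < dim_row (phi n p {a} X)" "j < dim_col (phi n p {a} X)"
  then have ij: "i < n" "j < n" by auto
  have "(Pd n p a * X * Pd n p a) $$ (i,j) = (\<Sum>k<n. (Pd n p a * X) $$ (i,k) * Pd n p a $$ (k,j))"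
    using ij assms by (intro mult_entry) auto
  also have "\<dots> = (\<Sum>k\<in>{j}. (Pd n p a * X) $$ (i,k) * Pd n p a $$ (k,j))"
    using ij by (intro sum.mono_neutral_cong_right) (auto simp: Pd_def dmat_def)
  also have "\<dots> = (Pd n p a * X) $$ (i,j) * of_real (p a j)" using ij by (simp add: Pd_def dmat_def)
  also have "(Pd n p a * X) $$ (i,j) = (\<Sum>k<n. Pd n p a $$ (i,k) * X $$ (k,j))"
    using ij assms by (intro mult_entry) auto
  also have "\<dots> = (\<Sum>k\<in>{i}. Pd n p a $$ (i,k) * X $$ (k,j))"
    using ij by (intro sum.mono_neutral_cong_right) (auto simp: Pd_def dmat_def)
  finally show "(Pd n p a * X * Pd n p a) $$ (i,j) = phi n p {a} X $$ (i,j)"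
    using ij by (simp add: Pd_def dmat_def phi_def)
qed (use assms in \<open>auto intro: mult_carrier_mat[of _ n n]\<close>)

lemma Pd_vec: assumes "v \<in> carrier_vec n" "i < n" shows "(Pd n p a *\<^sub>v v) $ i = of_real (p a i) * v $ i"
  unfolding Pd_def using dmat_vec[OF assms] .

lemma Pd_vec_eq: assumes "v \<in> carrier_vec n" shows "Pd n p a *\<^sub>v v = vec n (\<lambda>i. of_real (p a i) * v $ i)"
  by (rule eq_vecI) (use assms Pd_vec in auto)

lemma ip_phi:
  assumes "X \<in> carrier_mat n n" "v \<in> carrier_vec n" "w \<in> carrier_vec n"
  shows "ip w (phi n p S X *\<^sub>v v) = (\<Sum>a\<in>S. ip (Pd n p a *\<^sub>v w) (X *\<^sub>v (Pd n p a *\<^sub>v v)))"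
proof -
  have "ip w (phi n p S X *\<^sub>v v) = (\<Sum>i<n. cnj (w $ i) * (\<Sum>k<n. phi n p S X $$ (i,k) * v $ k))"
    unfolding ip_def using assms by (simp add: mult_vec_entry[where n=n] del: index_mult_mat_vec)
  also have "\<dots> = (\<Sum>i<n. \<Sum>k<n. \<Sum>a\<in>S. cnj (w $ i) * (of_real (p a i) * X $$ (i,k) * of_real (p a k) * v $ k))"
    by (simp add: phi_def sum_distrib_left sum_distrib_right)
  also have "\<dots> = (\<Sum>a\<in>S. \<Sum>i<n. \<Sum>k<n. cnj (w $ i) * (of_real (p a i) * X $$ (i,k) * of_real (p a k) * v $ k))"
    by (simp add: sum.swap[of _ S])
  also have "\<dots> = (\<Sum>a\<in>S. ip (Pd n p a *\<^sub>v w) (X *\<^sub>v (Pd n p a *\<^sub>v v)))"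
  proof (rule sum.cong[OF refl])
    fix a assume "a \<in> S"
    have "ip (Pd n p a *\<^sub>v w) (X *\<^sub>v (Pd n p a *\<^sub>v v)) =
      (\<Sum>i<n. cnj (of_real (p a i) * w $ i) * (\<Sum>k<n. X $$ (i,k) * (of_real (p a k) * v $ k)))"
      unfolding ip_def using assms
      by (simp add: mult_vec_entry[where n=n] Pd_vec_eq del: index_mult_mat_vec)
    also have "\<dots> = (\<Sum>i<n. \<Sum>k<n. cnj (w $ i) * (of_real (p a i) * X $$ (i,k) * of_real (p a k) * v $ k))"
      by (simp add: sum_distrib_left mult_ac)
    finally show "(\<Sum>i<n. \<Sum>k<n. cnj (w $ i) * (of_real (p a i) * X $$ (i,k) * of_real (p a k) * v $ k)) =
      ip (Pd n p a *\<^sub>v w) (X *\<^sub>v (Pd n p a *\<^sub>v v))" by simp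
  qed
  finally show ?thesis .
qed

lemma sqnorm_Pd_sum:
  assumes "y \<in> carrier_vec n" "finite S" "\<And>i. i < n \<Longrightarrow> (\<Sum>a\<in>S. (p a i)^2) \<le> 1"
  shows "(\<Sum>a\<in>S. sqnorm (Pd n p a *\<^sub>v y)) \<le> sqnorm y"
proof -
  have "(\<Sum>a\<in>S. sqnorm (Pd n p a *\<^sub>v y)) = (\<Sum>a\<in>S. \<Sum>i<n. (p a i)^2 * (cmod (y $ i))^2)"
    unfolding Pd_def using assms by (simp add: sqnorm_dmat)
  also have "\<dots> = (\<Sum>i<n. (\<Sum>a\<in>S. (p a i)^2) * (cmod (y $ i))^2)"
    by (simp add: sum.swap[of _ S] sum_distrib_right)
  also have "\<dots> \<le> (\<Sum>i<n. 1 * (cmod (y $ i))^2)"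
    by (intro sum_mono mult_right_mono) (use assms in auto)
  also have "\<dots> = sqnorm y" using assms by (simp add: sqnorm_def)
  finally show ?thesis .
qed

lemma phi_contract:
  assumes "opb n X c" "finite S" "\<And>i. i < n \<Longrightarrow> (\<Sum>a\<in>S. (p a i)^2) \<le> 1"
  shows "opb n (phi n p S X) c"
proof -
  have X: "X \<in> carrier_mat n n" and c: "0 \<le> c" using assms by (auto simp: opb_def)
  show ?thesis unfolding opb_def
  proof (intro conjI ballI)
    fix v :: "complex vec" assume v: "v \<in> carrier_vec n"
    define y where "y = phi n p S X *\<^sub>v v"
    have y: "y \<in> carrier_vec n" unfolding y_def by (intro mult_mat_vec_carrier[of _ n n]) (use v in auto)
    have Pv: "Pd n p a *\<^sub>v v \<in> carrier_vec n" for a by (intro mult_mat_vec_carrier[of _ n n]) (use v in auto)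
    have Py: "Pd n p a *\<^sub>v y \<in> carrier_vec n" for a by (intro mult_mat_vec_carrier[of _ n n]) (use y in auto)
    have "(vn y)^2 = Re (ip y y)" by (simp only: vn_sq sqnorm_ip)
    also have "\<dots> \<le> cmod (ip y y)" by (rule complex_Re_le_cmod)
    also have "ip y y = (\<Sum>a\<in>S. ip (Pd n p a *\<^sub>v y) (X *\<^sub>v (Pd n p a *\<^sub>v v)))"
      unfolding y_def[symmetric, THEN sym] using ip_phi[OF X v y] by (simp add: y_def)
    also have "cmod \<dots> \<le> (\<Sum>a\<in>S. cmod (ip (Pd n p a *\<^sub>v y) (X *\<^sub>v (Pd n p a *\<^sub>v v))))"
      by (rule norm_sum)
    also have "\<dots> \<le> (\<Sum>a\<in>S. vn (Pd n p a *\<^sub>v y) * (c * vn (Pd n p a *\<^sub>v v)))"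
    proof (rule sum_mono)
      fix a assume "a \<in> S"
      have "cmod (ip (Pd n p a *\<^sub>v y) (X *\<^sub>v (Pd n p a *\<^sub>v v))) \<le> vn (Pd n p a *\<^sub>v y) * vn (X *\<^sub>v (Pd n p a *\<^sub>v v))"
        by (intro cs) (use X in simp)
      also have "\<dots> \<le> vn (Pd n p a *\<^sub>v y) * (c * vn (Pd n p a *\<^sub>v v))"
        by (intro mult_left_mono opbD[OF assms(1) Pv]) auto
      finally show "cmod (ip (Pd n p a *\<^sub>v y) (X *\<^sub>v (Pd n p a *\<^sub>v v))) \<le> vn (Pd n p a *\<^sub>v y) * (c * vn (Pd n p a *\<^sub>v v))" .
    qed
    also have "\<dots> = c * (\<Sum>a\<in>S. \<bar>vn (Pd n p a *\<^sub>v y)\<bar> * \<bar>vn (Pd n p a *\<^sub>v v)\<bar>)"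
      by (simp add: sum_distrib_left mult_ac)
    also have "\<dots> \<le> c * (L2_set (\<lambda>a. vn (Pd n p a *\<^sub>v y)) S * L2_set (\<lambda>a. vn (Pd n p a *\<^sub>v v)) S)"
      by (intro mult_left_mono L2_set_mult_ineq c)
    finally have s0: "(vn y)^2 \<le> c * (L2_set (\<lambda>a. vn (Pd n p a *\<^sub>v y)) S * L2_set (\<lambda>a. vn (Pd n p a *\<^sub>v v)) S)" .
    have l1: "L2_set (\<lambda>a. vn (Pd n p a *\<^sub>v y)) S \<le> vn y"
      unfolding L2_set_def vn_sq vn_def
      using sqnorm_Pd_sum[OF y assms(2,3)] by simp
    have l2: "L2_set (\<lambda>a. vn (Pd n p a *\<^sub>v v)) S \<le> vn v"
      unfolding L2_set_def vn_sq vn_def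
      using sqnorm_Pd_sum[OF v assms(2,3)] by simp
    have "c * (L2_set (\<lambda>a. vn (Pd n p a *\<^sub>v y)) S * L2_set (\<lambda>a. vn (Pd n p a *\<^sub>v v)) S) \<le> c * (vn y * vn v)"
      by (intro mult_left_mono mult_mono l1 l2 c) auto
    with s0 have *: "(vn y)^2 \<le> c * (vn y * vn v)" by linarith
    have "vn y \<le> c * vn v"
    proof (cases "vn y = 0")
      case True then show ?thesis using c by simp
    next
      case False then have "vn y > 0" using vn_nonneg[of y] by linarith
      moreover have "vn y * vn y \<le> (c * vn v) * vn y" using * unfolding power2_eq_square by (simp only: mult_ac)
      ultimately show ?thesis by (rule mult_right_le_imp_le[rotated])
    qed
    then show "vn (phi n p S X *\<^sub>v v) \<le> c * vn v" unfolding y_def .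
  qed (use c in simp_all)
qed


definition pp :: "nat \<Rightarrow> (nat \<Rightarrow> real \<Rightarrow> real) \<Rightarrow> nat \<Rightarrow> nat \<Rightarrow> real" where
  "pp n chi a i = real n * integral (cell n i) (chi a)"

lemma Op_Pd: "Op n (chi a) = Pd n (pp n chi) a"
  unfolding Op_def Pd_def dmat_def pp_def by (rule eq_matI) auto

lemma pow_mat_Suc': assumes "A \<in> carrier_mat n n" shows "A ^\<^sub>m Suc k = A * A ^\<^sub>m k"
proof (induction k)
  case 0 then show ?case using assms by simp
next
  case (Suc k)
  have "A ^\<^sub>m Suc (Suc k) = (A * A ^\<^sub>m k) * A" using Suc by simp
  also have "\<dots> = A * (A ^\<^sub>m k * A)" using assms by (intro assoc_mult_mat[of _ n n _ n _ n]) auto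
  finally show ?case by simp
qed

locale uctx =
  fixes n :: nat and U :: "complex mat" and chi :: "nat \<Rightarrow> real \<Rightarrow> real"
  assumes U: "U \<in> carrier_mat n n" and UhU: "mat_adjoint U * U = 1\<^sub>m n" and UUh: "U * mat_adjoint U = 1\<^sub>m n"
begin

abbreviation "Uh \<equiv> mat_adjoint U"
abbreviation "p \<equiv> pp n chi"

lemma Uh[simp]: "Uh \<in> carrier_mat n n" using U by simp
lemma U'[simp]: "U \<in> carrier_mat n n" using U by simp
lemma U_dims[simp]: "dim_row U = n" "dim_col U = n" using U carrier_matD by blast+
lemma Uhh[simp]: "mat_adjoint Uh = U" using U by (rule adj_adj)
lemma mcar[simp]: "A \<in> carrier_mat n n \<Longrightarrow> B \<in> carrier_mat n n \<Longrightarrow> A * B \<in> carrier_mat n n"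
  by (rule mult_carrier_mat)
lemma massoc[simp]: "A \<in> carrier_mat n n \<Longrightarrow> B \<in> carrier_mat n n \<Longrightarrow> C \<in> carrier_mat n n \<Longrightarrow> (A * B) * C = A * (B * C)"
  by (rule assoc_mult_mat[of _ n n _ n _ n])
lemma UhU_cancel[simp]: "X \<in> carrier_mat n n \<Longrightarrow> Uh * (U * X) = X"
  using UhU by (simp flip: massoc)
lemma UUh_cancel[simp]: "X \<in> carrier_mat n n \<Longrightarrow> U * (Uh * X) = X"
  using UUh by (simp flip: massoc)
lemma vcar[simp]: "A \<in> carrier_mat n n \<Longrightarrow> v \<in> carrier_vec n \<Longrightarrow> A *\<^sub>v v \<in> carrier_vec n"
  by (rule mult_mat_vec_carrier)
lemma UhU'[simp]: "Uh * U = 1\<^sub>m n" using UhU .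
lemma UUh'[simp]: "U * Uh = 1\<^sub>m n" using UUh .

lemma Pt_carrier[simp]: "Pt n U chi a j \<in> carrier_mat n n"
  unfolding Pt_def Op_Pd by (intro mult_carrier_mat[of _ n n]) auto

lemma Pw_carrier[simp]: "Pw_from n U chi j w \<in> carrier_mat n n"
  by (induction w arbitrary: j) (auto intro: mult_carrier_mat[of _ n n])

lemma Pword_carrier[simp]: "Pword n U chi w \<in> carrier_mat n n"
  unfolding Pword_def by simp

lemma Pt0: "Pt n U chi a 0 = Pd n p a"
proof -
  have "dim_row Uh = n" by simp
  then show ?thesis unfolding Pt_def Op_Pd using U by simp
qed

lemma conj3: assumes "X \<in> carrier_mat n n"
  shows "Uh * (Uh * X * U) * U = (Uh * Uh) * X * (U * U)"
  using assms by simp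

lemma PtSuc: "Pt n U chi a (Suc j) = Uh * Pt n U chi a j * U"
proof -
  have "Pt n U chi a (Suc j) = (Uh * Uh ^\<^sub>m j) * Op n (chi a) * (U ^\<^sub>m j * U)"
    unfolding Pt_def using pow_mat_Suc'[OF Uh] by simp
  also have "\<dots> = Uh * (Uh ^\<^sub>m j * Op n (chi a) * U ^\<^sub>m j) * U"
    unfolding Op_Pd by simp
  finally show ?thesis unfolding Pt_def .
qed

lemma conj_mult: assumes "X \<in> carrier_mat n n" "Y \<in> carrier_mat n n"
  shows "(Uh * X * U) * (Uh * Y * U) = Uh * (X * Y) * U"
proof -
  have "(Uh * X * U) * (Uh * Y * U) = Uh * X * (U * Uh) * Y * U"
    using assms by simp
  also have "\<dots> = Uh * (X * Y) * U" using assms UUh by simp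
  finally show ?thesis .
qed

lemma PwSuc: "Pw_from n U chi (Suc j) w = Uh * Pw_from n U chi j w * U"
proof (induction w arbitrary: j)
  case Nil then show ?case using UhU by simp
next
  case (Cons a w)
  have "Pw_from n U chi (Suc j) (a # w) = Pw_from n U chi (Suc (Suc j)) w * Pt n U chi a (Suc j)" by simp
  also have "\<dots> = (Uh * Pw_from n U chi (Suc j) w * U) * (Uh * Pt n U chi a j * U)"
    using Cons PtSuc by simp
  also have "\<dots> = Uh * (Pw_from n U chi (Suc j) w * Pt n U chi a j) * U" by (rule conj_mult) auto
  finally show ?case by simp
qed

lemma Pword_Cons: "Pword n U chi (a # w) = (Uh * Pword n U chi w * U) * Pd n p a"
  unfolding Pword_def using PwSuc Pt0 by simp

lemma Pd_adj: "mat_adjoint (Pd n p a) = Pd n p a"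
  unfolding Pd_def by (rule dmat_adj) simp

lemma adj_conj: assumes "X \<in> carrier_mat n n" shows "mat_adjoint (Uh * X * U) = Uh * mat_adjoint X * U"
  using assms U by (simp add: adj_mult[of _ n] adj_adj assoc_mult_mat[of _ n n _ n _ n])

lemma Y_Cons: "mat_adjoint (Pword n U chi (a # w)) * Pword n U chi (a # w)
   = phi n p {a} (Uh * (mat_adjoint (Pword n U chi w) * Pword n U chi w) * U)"
proof -
  define X where "X = Pword n U chi w"
  have X: "X \<in> carrier_mat n n" unfolding X_def by simp
  have "mat_adjoint (Pword n U chi (a # w)) * Pword n U chi (a # w)
     = (Pd n p a * (Uh * mat_adjoint X * U)) * ((Uh * X * U) * Pd n p a)"
    unfolding Pword_Cons X_def[symmetric] using X
    by (simp add: adj_mult[of _ n] Pd_adj adj_conj)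
  also have "\<dots> = Pd n p a * ((Uh * mat_adjoint X * U) * (Uh * X * U)) * Pd n p a"
    using X by simp
  also have "\<dots> = Pd n p a * (Uh * (mat_adjoint X * X) * U) * Pd n p a"
    using X by (simp add: conj_mult)
  also have "\<dots> = phi n p {a} (Uh * (mat_adjoint X * X) * U)"
    by (rule phi_single) (use X in simp)
  finally show ?thesis unfolding X_def .
qed

lemma Ystar_Cons: "mat_adjoint (Pword n U chi (a # w)) = Pd n p a * (Uh * mat_adjoint (Pword n U chi w) * U)"
  unfolding Pword_Cons using Pd_adj by (simp add: adj_mult[of _ n] adj_conj)

end


lemma words_0: "words l 0 = {[]}" unfolding words_def by auto

lemma words_Suc: "words l (Suc j) = (\<lambda>(a,w). a # w) ` ({1..l} \<times> words l j)"
proof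
  show "words l (Suc j) \<subseteq> (\<lambda>(a,w). a # w) ` ({1..l} \<times> words l j)"
  proof
    fix x assume "x \<in> words l (Suc j)"
    then obtain a w where "x = a # w" "a \<in> {1..l}" "w \<in> words l j"
      unfolding words_def by (cases x) auto
    then show "x \<in> (\<lambda>(a,w). a # w) ` ({1..l} \<times> words l j)" by force
  qed
qed (auto simp: words_def)

lemma finite_words[simp]: "finite (words l j)"
  by (induction j) (auto simp: words_0 words_Suc)

lemma sum_words_Suc: "(\<Sum>w\<in>words l (Suc j). f w) = (\<Sum>a\<in>{1..l}. \<Sum>w\<in>words l j. f (a # w))"
proof -
  have "(\<Sum>w\<in>words l (Suc j). f w) = (\<Sum>x\<in>{1..l} \<times> words l j. f ((\<lambda>(a,w). a # w) x))"
    unfolding words_Suc by (subst sum.reindex) (auto simp: inj_on_def)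
  also have "\<dots> = (\<Sum>a\<in>{1..l}. \<Sum>w\<in>words l j. f (a # w))"
    by (simp add: sum.cartesian_product split_def)
  finally show ?thesis .
qed

primrec Wm :: "nat \<Rightarrow> complex mat \<Rightarrow> (nat \<Rightarrow> real \<Rightarrow> real) \<Rightarrow> nat \<Rightarrow> nat list \<Rightarrow> nat \<Rightarrow> complex mat" where
  "Wm n U chi l e 0 = mat_adjoint (Pword n U chi e) * Pword n U chi e"
| "Wm n U chi l e (Suc j) = phi n (pp n chi) {1..l} (mat_adjoint U * Wm n U chi l e j * U)"

context uctx begin

lemma unitary_U: "unitary_mat n U" using U UhU UUh unfolding unitary_mat_def by simp
lemma unitary_Uh: "unitary_mat n Uh" using unitary_adj[OF unitary_U] .

lemma Wm_carrier[simp]: "Wm n U chi l e j \<in> carrier_mat n n"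
  by (induction j) auto

lemma qf_conj: assumes "W \<in> carrier_mat n n" "z \<in> carrier_vec n"
  shows "qf (U *\<^sub>v z) W = qf z (Uh * W * U)"
proof -
  have "qf (U *\<^sub>v z) W = ip (U *\<^sub>v z) (W *\<^sub>v (U *\<^sub>v z))" unfolding qf_def ..
  also have "\<dots> = ip z (Uh *\<^sub>v (W *\<^sub>v (U *\<^sub>v z)))" using assms by (intro ip_adj) auto
  also have "Uh *\<^sub>v (W *\<^sub>v (U *\<^sub>v z)) = (Uh * W * U) *\<^sub>v z"
    using assms by (simp add: assoc_mult_mat_vec[of _ n n _ n _])
  finally show ?thesis unfolding qf_def .
qed

lemma qf_phi: assumes "M \<in> carrier_mat n n" "v \<in> carrier_vec n"
  shows "qf v (phi n p S M) = (\<Sum>a\<in>S. qf (Pd n p a *\<^sub>v v) M)"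
  unfolding qf_def using ip_phi[OF assms(1,2,2)] by simp

lemma pull_qf:
  assumes "v \<in> carrier_vec n"
  shows "of_real (\<Sum>w\<in>words l j. sqnorm (Pword n U chi (w @ e) *\<^sub>v v)) = qf v (Wm n U chi l e j)"
  using assms
proof (induction j arbitrary: v)
  case 0 then show ?case by (simp add: words_0 sqnorm_qf[of _ n])
next
  case (Suc j)
  have "(\<Sum>w\<in>words l (Suc j). sqnorm (Pword n U chi (w @ e) *\<^sub>v v))
     = (\<Sum>a\<in>{1..l}. \<Sum>w\<in>words l j. sqnorm (Pword n U chi (a # (w @ e)) *\<^sub>v v))"
    by (simp add: sum_words_Suc)
  also have "\<dots> = (\<Sum>a\<in>{1..l}. \<Sum>w\<in>words l j. sqnorm (Pword n U chi (w @ e) *\<^sub>v (U *\<^sub>v (Pd n p a *\<^sub>v v))))"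
  proof (intro sum.cong refl)
    fix a w
    have "Pword n U chi (a # (w @ e)) *\<^sub>v v = Uh *\<^sub>v (Pword n U chi (w @ e) *\<^sub>v (U *\<^sub>v (Pd n p a *\<^sub>v v)))"
      unfolding Pword_Cons using Suc.prems by (simp add: assoc_mult_mat_vec[of _ n n _ n _])
    then show "sqnorm (Pword n U chi (a # (w @ e)) *\<^sub>v v) = sqnorm (Pword n U chi (w @ e) *\<^sub>v (U *\<^sub>v (Pd n p a *\<^sub>v v)))"
      using unitary_norm[OF unitary_Uh] Suc.prems by simp
  qed
  finally have "of_real (\<Sum>w\<in>words l (Suc j). sqnorm (Pword n U chi (w @ e) *\<^sub>v v))
     = (\<Sum>a\<in>{1..l}. of_real (\<Sum>w\<in>words l j. sqnorm (Pword n U chi (w @ e) *\<^sub>v (U *\<^sub>v (Pd n p a *\<^sub>v v)))))"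
    by simp
  also have "\<dots> = (\<Sum>a\<in>{1..l}. qf (U *\<^sub>v (Pd n p a *\<^sub>v v)) (Wm n U chi l e j))"
    using Suc by simp
  also have "\<dots> = (\<Sum>a\<in>{1..l}. qf (Pd n p a *\<^sub>v v) (Uh * Wm n U chi l e j * U))"
    using Suc.prems by (simp add: qf_conj)
  also have "\<dots> = qf v (Wm n U chi l e (Suc j))"
    using Suc.prems by (simp add: qf_phi)
  finally show ?case .
qed

definition Gs :: "nat \<Rightarrow> nat list \<Rightarrow> nat \<Rightarrow> complex vec \<Rightarrow> real" where
  "Gs l e j v = (\<Sum>w\<in>words l j. sqnorm (mat_adjoint (Pword n U chi (w @ e)) *\<^sub>v v))"

lemma Gs_Suc: assumes "v \<in> carrier_vec n"
  shows "Gs l e (Suc j) v = (\<Sum>w\<in>words l j. \<Sum>a\<in>{1..l}.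
      sqnorm (Pd n p a *\<^sub>v (Uh *\<^sub>v (mat_adjoint (Pword n U chi (w @ e)) *\<^sub>v (U *\<^sub>v v)))))"
proof -
  have "Gs l e (Suc j) v = (\<Sum>a\<in>{1..l}. \<Sum>w\<in>words l j. sqnorm (mat_adjoint (Pword n U chi (a # (w @ e))) *\<^sub>v v))"
    unfolding Gs_def by (simp add: sum_words_Suc)
  also have "\<dots> = (\<Sum>a\<in>{1..l}. \<Sum>w\<in>words l j.
      sqnorm (Pd n p a *\<^sub>v (Uh *\<^sub>v (mat_adjoint (Pword n U chi (w @ e)) *\<^sub>v (U *\<^sub>v v)))))"
    unfolding Ystar_Cons using assms by (simp add: assoc_mult_mat_vec[of _ n n _ n _])
  also have "\<dots> = (\<Sum>w\<in>words l j. \<Sum>a\<in>{1..l}.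
      sqnorm (Pd n p a *\<^sub>v (Uh *\<^sub>v (mat_adjoint (Pword n U chi (w @ e)) *\<^sub>v (U *\<^sub>v v)))))"
    by (rule sum.swap)
  finally show ?thesis .
qed

end


definition xs :: "nat \<Rightarrow> nat \<Rightarrow> real" where "xs n i = (real i + 1/2) / real n"

lemma cell_cbox: "cell n i = cbox (real i / real n) (real (i+1) / real n)"
  unfolding cell_def by simp

lemma cell_content: assumes "n > 0" shows "measure lborel (cell n i) = 1 / real n"
  using assms unfolding cell_def by (simp add: divide_simps)

lemma cell_ivl_content[simp]: assumes "n > 0"
  shows "measure lborel {real i / real n..(1 + real i) / real n} = 1 / real n"
  using assms by (simp add: divide_simps)

lemma xs_in: assumes "n > 0" "y \<in> cell n i" shows "\<bar>y - xs n i\<bar> \<le> 1 / (2 * real n)"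
  using assms unfolding cell_def xs_def by (auto simp: divide_simps abs_if)

lemma const_int: "(\<lambda>x. c) integrable_on cell n i"
  by (simp only: cell_cbox integrable_const)

lemma cont_lip: assumes "\<And>x y. \<bar>f x - f y\<bar> \<le> K * \<bar>x - y\<bar>" "0 \<le> K"
  shows "continuous_on S (f :: real \<Rightarrow> real)"
  by (rule lipschitz_on_continuous_on[of K]) (use assms in \<open>auto intro!: lipschitz_onI simp: dist_real_def\<close>)

lemma integrable_cell: assumes "continuous_on UNIV (f :: real \<Rightarrow> real)" shows "f integrable_on cell n i"
  unfolding cell_def by (rule integrable_continuous_interval) (use assms continuous_on_subset in blast)

locale pctx =
  fixes l :: nat and chi :: "nat \<Rightarrow> real \<Rightarrow> real" and K :: real
  assumes Kpos: "K > 0"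
    and lip: "\<And>a x y. a \<in> {1..l} \<Longrightarrow> \<bar>chi a x - chi a y\<bar> \<le> K * \<bar>x - y\<bar>"
    and sum1: "\<And>x. (\<Sum>a\<in>{1..l}. (chi a x)^2) = 1"
begin

lemma chi_bound: assumes "a \<in> {1..l}" shows "\<bar>chi a x\<bar> \<le> 1"
proof -
  have "(chi a x)^2 \<le> (\<Sum>b\<in>{1..l}. (chi b x)^2)"
    using assms by (intro member_le_sum) auto
  then have "(chi a x)^2 \<le> 1^2" using sum1 by simp
  then show ?thesis by (simp add: abs_square_le_1[symmetric])
qed

lemma chi_cont: assumes "a \<in> {1..l}" shows "continuous_on UNIV (chi a)"
  by (rule cont_lip[of _ K]) (use lip[OF assms] Kpos in auto)

lemma chi_int: assumes "a \<in> {1..l}" shows "chi a integrable_on cell n i"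
  by (rule integrable_cell[OF chi_cont[OF assms]])

lemma chi2_int: assumes "a \<in> {1..l}" shows "(\<lambda>x. (chi a x)^2) integrable_on cell n i"
  by (rule integrable_cell) (intro continuous_intros chi_cont[OF assms])

lemma p_approx: assumes "n > 0" "a \<in> {1..l}"
  shows "\<bar>pp n chi a i - chi a (xs n i)\<bar> \<le> K / real n"
proof -
  let ?c = "chi a (xs n i)"
  have int: "(\<lambda>y. chi a y - ?c) integrable_on cell n i"
    by (rule integrable_diff[OF chi_int[OF assms(2)] const_int])
  have "integral (cell n i) (\<lambda>y. chi a y - ?c) = integral (cell n i) (chi a) - ?c / real n"
    using chi_int[OF assms(2)] assms(1)
    by (subst integral_diff) (auto simp: cell_cbox cell_content[symmetric, OF assms(1)] simp del: content_real_if)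
  then have "real n * integral (cell n i) (\<lambda>y. chi a y - ?c) = real n * integral (cell n i) (chi a) - real n * (?c / real n)"
    by (simp add: right_diff_distrib)
  then have eq: "pp n chi a i - ?c = real n * integral (cell n i) (\<lambda>y. chi a y - ?c)"
    using assms(1) unfolding pp_def by simp
  have "norm (integral (cell n i) (\<lambda>y. chi a y - ?c)) \<le> (K / (2 * real n)) * measure lborel (cbox (real i / real n) (real (i+1) / real n))"
  proof (rule has_integral_bound)
    show "((\<lambda>y. chi a y - ?c) has_integral integral (cell n i) (\<lambda>y. chi a y - ?c)) (cbox (real i / real n) (real (i+1) / real n))"
      using int unfolding cell_cbox by (rule integrable_integral)
    fix y assume "y \<in> cbox (real i / real n) (real (i+1) / real n)"
    then have "y \<in> cell n i" unfolding cell_cbox .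
    then have "\<bar>y - xs n i\<bar> \<le> 1 / (2 * real n)" using xs_in[OF assms(1)] by blast
    then have "K * \<bar>y - xs n i\<bar> \<le> K * (1 / (2 * real n))" using Kpos by (intro mult_left_mono) auto
    then show "norm (chi a y - ?c) \<le> K / (2 * real n)" using lip[OF assms(2), of y "xs n i"] by simp
  qed (use Kpos in simp)
  also have "measure lborel (cbox (real i / real n) (real (i+1) / real n)) = 1 / real n"
    using cell_content[OF assms(1)] unfolding cell_cbox .
  finally have "\<bar>integral (cell n i) (\<lambda>y. chi a y - ?c)\<bar> \<le> K / (2 * real n) * (1 / real n)" by simp
  then have "\<bar>pp n chi a i - ?c\<bar> \<le> real n * (K / (2 * real n) * (1 / real n))"
    unfolding eq abs_mult abs_of_nat using assms(1) by (intro mult_left_mono) auto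
  also have "\<dots> = K / (2 * real n)" using assms(1) by simp
  also have "\<dots> \<le> K / real n" using Kpos assms(1) by (simp add: divide_simps)
  finally show ?thesis .
qed

lemma p_jensen: assumes "n > 0" "a \<in> {1..l}"
  shows "(pp n chi a i)^2 \<le> real n * integral (cell n i) (\<lambda>x. (chi a x)^2)"
proof -
  let ?I1 = "integral (cell n i) (chi a)" and ?I2 = "integral (cell n i) (\<lambda>x. (chi a x)^2)"
  let ?c = "real n * ?I1"
  have i1: "chi a integrable_on cell n i" by (rule chi_int[OF assms(2)])
  have i2: "(\<lambda>x. (chi a x)^2) integrable_on cell n i" by (rule chi2_int[OF assms(2)])
  have ic: "(\<lambda>x. 2 * ?c * chi a x) integrable_on cell n i" using integrable_on_cmult_left[OF i1, of "2 * ?c"] by simp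
  have icc: "(\<lambda>x. ?c^2) integrable_on cell n i" by (rule const_int)
  have "0 \<le> integral (cell n i) (\<lambda>x. (chi a x - ?c)^2)"
    by (intro integral_nonneg integrable_cell continuous_on_power continuous_on_diff chi_cont[OF assms(2)] continuous_on_const) auto
  also have "(\<lambda>x. (chi a x - ?c)^2) = (\<lambda>x. ((chi a x)^2 - 2 * ?c * chi a x) + ?c^2)"
    by (auto simp: power2_eq_square algebra_simps)
  also have "integral (cell n i) \<dots> = (?I2 - 2 * ?c * ?I1) + ?c^2 / real n"
    using i1 i2 ic icc assms(1)
    by (simp add: integral_add integral_diff integrable_diff cell_cbox cell_content[symmetric, OF assms(1)] del: content_real_if)
  finally have "0 \<le> ?I2 - 2 * ?c * ?I1 + ?c^2 / real n" .
  then have "0 \<le> ?I2 - real n * ?I1^2" using assms(1) by (simp add: power2_eq_square field_simps)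
  then show ?thesis unfolding pp_def using assms(1) by (simp add: power2_eq_square algebra_simps)
qed

lemma p_sq_sum: assumes "n > 0" shows "(\<Sum>a\<in>{1..l}. (pp n chi a i)^2) \<le> 1"
proof -
  have "(\<Sum>a\<in>{1..l}. (pp n chi a i)^2) \<le> (\<Sum>a\<in>{1..l}. real n * integral (cell n i) (\<lambda>x. (chi a x)^2))"
    by (intro sum_mono p_jensen assms) auto
  also have "\<dots> = real n * (\<Sum>a\<in>{1..l}. integral (cell n i) (\<lambda>x. (chi a x)^2))"
    by (simp add: sum_distrib_left)
  also have "\<dots> = real n * integral (cell n i) (\<lambda>x. \<Sum>a\<in>{1..l}. (chi a x)^2)"
    by (subst integral_sum) (auto intro: chi2_int)
  also have "\<dots> = 1" using assms unfolding sum1 by (simp add: cell_cbox divide_simps)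
  finally show ?thesis .
qed

lemma p_sq_sub: assumes "n > 0" "A \<subseteq> {1..l}" shows "(\<Sum>a\<in>A. (pp n chi a i)^2) \<le> 1"
proof -
  have "(\<Sum>a\<in>A. (pp n chi a i)^2) \<le> (\<Sum>a\<in>{1..l}. (pp n chi a i)^2)"
    using assms by (intro sum_mono2) auto
  then show ?thesis using p_sq_sum[OF assms(1), of i] by (rule order_trans)
qed

lemma p_bound: assumes "n > 0" "a \<in> {1..l}" shows "\<bar>pp n chi a i\<bar> \<le> 1"
proof -
  have "(pp n chi a i)^2 \<le> 1^2" using p_sq_sub[OF assms(1), of "{a}"] assms(2) by simp
  then show ?thesis by (simp add: abs_square_le_1[symmetric])
qed

lemma p_sq_approx: assumes "n > 0" "a \<in> {1..l}"
  shows "\<bar>(pp n chi a i)^2 - (chi a (xs n i))^2\<bar> \<le> 2 * K / real n"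
proof -
  have "\<bar>(pp n chi a i)^2 - (chi a (xs n i))^2\<bar> = \<bar>pp n chi a i - chi a (xs n i)\<bar> * \<bar>pp n chi a i + chi a (xs n i)\<bar>"
    by (simp add: power2_eq_square algebra_simps flip: abs_mult)
  also have "\<dots> \<le> (K / real n) * 2"
  proof (rule mult_mono)
    have "\<bar>pp n chi a i + chi a (xs n i)\<bar> \<le> \<bar>pp n chi a i\<bar> + \<bar>chi a (xs n i)\<bar>" by (rule abs_triangle_ineq)
    then show "\<bar>pp n chi a i + chi a (xs n i)\<bar> \<le> 2" using p_bound[OF assms, of i] chi_bound[OF assms(2), of "xs n i"] by linarith
  qed (use p_approx[OF assms] Kpos assms(1) in auto)
  finally show ?thesis by (simp add: mult.commute)
qed

lemma p_sq_lower: assumes "n > 0" shows "1 - real l * (2 * K / real n) \<le> (\<Sum>a\<in>{1..l}. (pp n chi a i)^2)"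
proof -
  have "(\<Sum>a\<in>{1..l}. (chi a (xs n i))^2) - (\<Sum>a\<in>{1..l}. (pp n chi a i)^2) \<le> (\<Sum>a\<in>{1..l}. 2 * K / real n)"
    unfolding sum_subtractf[symmetric]
  proof (intro sum_mono)
    fix a assume "a \<in> {1..l}"
    from p_sq_approx[OF assms this, of i] show "(chi a (xs n i))^2 - (pp n chi a i)^2 \<le> 2 * K / real n" by linarith
  qed
  then show ?thesis using sum1 by simp
qed

end


context uctx begin

lemma row_norm: assumes "i < n" shows "(\<Sum>j<n. (cmod (U $$ (i,j)))^2) = 1"
proof -
  have "(U * Uh) $$ (i,i) = (\<Sum>j<n. U $$ (i,j) * Uh $$ (j,i))" using assms by (intro mult_entry) auto
  also have "\<dots> = (\<Sum>j<n. of_real ((cmod (U $$ (i,j)))^2))"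
    using assms by (intro sum.cong refl) (simp add: complex_norm_square[symmetric] del: of_real_power)
  finally have "of_real (\<Sum>j<n. (cmod (U $$ (i,j)))^2) = (1::complex)" using assms UUh by simp
  then show ?thesis using of_real_eq_1_iff by blast
qed

lemma egorov_abs:
  fixes h k :: "nat \<Rightarrow> real" and e Cc :: real
  assumes e: "0 \<le> e" and Cc: "0 \<le> Cc"
    and card: "\<And>j. j < n \<Longrightarrow> real (card {i. i < n \<and> U $$ (i,j) \<noteq> 0}) \<le> Cc"
    and close: "\<And>i j. i < n \<Longrightarrow> j < n \<Longrightarrow> U $$ (i,j) \<noteq> 0 \<Longrightarrow> \<bar>h i - k j\<bar> \<le> e"
  shows "opb n (Uh * dmat n (\<lambda>i. of_real (h i)) * U - dmat n (\<lambda>i. of_real (k i))) (e * sqrt Cc)"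
proof -
  define M where "M = mat n n (\<lambda>(i,j). of_real (h i - k j) * U $$ (i,j))"
  have M: "M \<in> carrier_mat n n" unfolding M_def by auto
  have D1: "dmat n (\<lambda>i. of_real (h i)) * U = mat n n (\<lambda>(i,j). of_real (h i) * U $$ (i,j))"
  proof (rule eq_matI)
    fix i j assume "i < dim_row (mat n n (\<lambda>(i,j). of_real (h i) * U $$ (i,j)))" "j < dim_col (mat n n (\<lambda>(i,j). (of_real (h i) :: complex) * U $$ (i,j)))"
    then have ij: "i < n" "j < n" by auto
    have "(dmat n (\<lambda>i. of_real (h i)) * U) $$ (i,j) = (\<Sum>q<n. dmat n (\<lambda>i. of_real (h i)) $$ (i,q) * U $$ (q,j))"
      using ij by (intro mult_entry) auto
    also have "\<dots> = (\<Sum>q\<in>{i}. dmat n (\<lambda>i. of_real (h i)) $$ (i,q) * U $$ (q,j))"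
      using ij by (intro sum.mono_neutral_cong_right) (auto simp: dmat_def)
    finally show "(dmat n (\<lambda>i. of_real (h i)) * U) $$ (i,j) = mat n n (\<lambda>(i,j). of_real (h i) * U $$ (i,j)) $$ (i,j)"
      using ij by (simp add: dmat_def)
  qed auto
  have D2: "U * dmat n (\<lambda>i. of_real (k i)) = mat n n (\<lambda>(i,j). U $$ (i,j) * of_real (k j))"
  proof (rule eq_matI)
    fix i j assume "i < dim_row (mat n n (\<lambda>(i,j). U $$ (i,j) * of_real (k j)))" "j < dim_col (mat n n (\<lambda>(i,j). U $$ (i,j) * (of_real (k j) :: complex)))"
    then have ij: "i < n" "j < n" by auto
    have "(U * dmat n (\<lambda>i. of_real (k i))) $$ (i,j) = (\<Sum>q<n. U $$ (i,q) * dmat n (\<lambda>i. of_real (k i)) $$ (q,j))"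
      using ij by (intro mult_entry) auto
    also have "\<dots> = (\<Sum>q\<in>{j}. U $$ (i,q) * dmat n (\<lambda>i. of_real (k i)) $$ (q,j))"
      using ij by (intro sum.mono_neutral_cong_right) (auto simp: dmat_def)
    finally show "(U * dmat n (\<lambda>i. of_real (k i))) $$ (i,j) = mat n n (\<lambda>(i,j). U $$ (i,j) * of_real (k j)) $$ (i,j)"
      using ij by (simp add: dmat_def)
  qed auto
  have eqM: "dmat n (\<lambda>i. of_real (h i)) * U - U * dmat n (\<lambda>i. of_real (k i)) = M"
    unfolding D1 D2 M_def by (rule eq_matI) (auto simp: algebra_simps)
  have eq: "Uh * dmat n (\<lambda>i. of_real (h i)) * U - dmat n (\<lambda>i. of_real (k i)) = Uh * M"
  proof -
    have "Uh * M = Uh * (dmat n (\<lambda>i. of_real (h i)) * U) - Uh * (U * dmat n (\<lambda>i. of_real (k i)))"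
      unfolding eqM[symmetric] by (rule mult_minus_distrib_mat[of _ n n]) auto
    then show ?thesis by simp
  qed
  have bnd: "sqnorm (M *\<^sub>v v) \<le> (e^2 * Cc) * sqnorm v" if v: "v \<in> carrier_vec n" for v
  proof -
    define w where "w i j = (if U $$ (i,j) \<noteq> 0 then e * cmod (v $ j) else 0)" for i j
    have row: "(cmod ((M *\<^sub>v v) $ i))^2 \<le> (\<Sum>j<n. (w i j)^2)" if i: "i < n" for i
    proof -
      have "cmod ((M *\<^sub>v v) $ i) = cmod (\<Sum>j<n. M $$ (i,j) * v $ j)"
        using i v M by (simp add: mult_vec_entry[where n=n] del: index_mult_mat_vec)
      also have "\<dots> \<le> (\<Sum>j<n. cmod (M $$ (i,j) * v $ j))" by (rule norm_sum)
      also have "\<dots> \<le> (\<Sum>j<n. \<bar>cmod (U $$ (i,j))\<bar> * \<bar>w i j\<bar>)"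
      proof (rule sum_mono)
        fix j assume j: "j \<in> {..<n}"
        show "cmod (M $$ (i,j) * v $ j) \<le> \<bar>cmod (U $$ (i,j))\<bar> * \<bar>w i j\<bar>"
        proof (cases "U $$ (i,j) = 0")
          case True then show ?thesis using i j by (simp add: M_def)
        next
          case False
          have "cmod (M $$ (i,j) * v $ j) = \<bar>h i - k j\<bar> * cmod (U $$ (i,j)) * cmod (v $ j)"
            using i j by (simp add: M_def norm_mult del: of_real_diff)
          also have "\<dots> \<le> e * cmod (U $$ (i,j)) * cmod (v $ j)"
            using close[OF i _ False] j by (intro mult_right_mono) auto
          finally show ?thesis using False e by (simp add: w_def mult_ac)
        qed
      qed
      also have "\<dots> \<le> L2_set (\<lambda>j. cmod (U $$ (i,j))) {..<n} * L2_set (w i) {..<n}"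
        by (rule L2_set_mult_ineq)
      also have "L2_set (\<lambda>j. cmod (U $$ (i,j))) {..<n} = 1"
        unfolding L2_set_def using row_norm[OF i] by simp
      finally have "cmod ((M *\<^sub>v v) $ i) \<le> L2_set (w i) {..<n}" by simp
      then have "(cmod ((M *\<^sub>v v) $ i))^2 \<le> (L2_set (w i) {..<n})^2"
        by (intro power_mono) auto
      also have "\<dots> = (\<Sum>j<n. (w i j)^2)" unfolding L2_set_def by (simp add: sum_nonneg)
      finally show ?thesis .
    qed
    have "sqnorm (M *\<^sub>v v) = (\<Sum>i<n. (cmod ((M *\<^sub>v v) $ i))^2)" unfolding sqnorm_def using M by simp
    also have "\<dots> \<le> (\<Sum>i<n. \<Sum>j<n. (w i j)^2)" by (intro sum_mono row) auto
    also have "\<dots> = (\<Sum>j<n. \<Sum>i<n. (w i j)^2)" by (rule sum.swap)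
    also have "\<dots> \<le> (\<Sum>j<n. (e^2 * Cc) * (cmod (v $ j))^2)"
    proof (rule sum_mono)
      fix j assume j: "j \<in> {..<n}"
      have "(\<Sum>i<n. (w i j)^2) = (\<Sum>i\<in>{i. i < n \<and> U $$ (i,j) \<noteq> 0}. (e * cmod (v $ j))^2)"
        unfolding w_def by (intro sum.mono_neutral_cong_right) auto
      also have "\<dots> = real (card {i. i < n \<and> U $$ (i,j) \<noteq> 0}) * (e * cmod (v $ j))^2"
        by simp
      also have "\<dots> \<le> Cc * (e * cmod (v $ j))^2" using card j by (intro mult_right_mono) auto
      finally show "(\<Sum>i<n. (w i j)^2) \<le> (e^2 * Cc) * (cmod (v $ j))^2" by (simp add: power_mult_distrib mult_ac)
    qed
    also have "\<dots> = (e^2 * Cc) * sqnorm v" using v by (simp add: sqnorm_def sum_distrib_left)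
    finally show ?thesis .
  qed
  have opbM: "opb n M (e * sqrt Cc)"
    unfolding opb_def
  proof (intro conjI ballI)
    fix v :: "complex vec" assume v: "v \<in> carrier_vec n"
    have "vn (M *\<^sub>v v) \<le> sqrt ((e^2 * Cc) * sqnorm v)" unfolding vn_def using bnd[OF v] by simp
    also have "\<dots> = e * sqrt Cc * vn v" using e Cc by (simp add: vn_def real_sqrt_mult)
    finally show "vn (M *\<^sub>v v) \<le> e * sqrt Cc * vn v" .
  qed (use M e Cc in auto)
  have "opb n (Uh * M) (1 * (e * sqrt Cc))"
    by (rule opb_mult[OF opb_unitary[OF unitary_Uh] opbM])
  then show ?thesis unfolding eq by simp
qed

end


definition good :: "(real \<Rightarrow> real) \<Rightarrow> real \<Rightarrow> bool" where
  "good g L \<longleftrightarrow> 0 \<le> L \<and> (\<forall>x\<in>{0..1}. \<forall>y\<in>{0..1}. \<bar>g x - g y\<bar> \<le> L * \<bar>x - y\<bar>) \<and>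
     (\<forall>x\<in>{0..1}. \<bar>g x\<bar> \<le> 1) \<and> g 0 = g 1"

lemma goodD: assumes "good g L"
  shows "0 \<le> L" "\<And>x y. x \<in> {0..1} \<Longrightarrow> y \<in> {0..1} \<Longrightarrow> \<bar>g x - g y\<bar> \<le> L * \<bar>x - y\<bar>"
    "\<And>x. x \<in> {0..1} \<Longrightarrow> \<bar>g x\<bar> \<le> 1" "g 0 = g 1"
  using assms unfolding good_def by auto

lemma card_window:
  assumes "0 \<le> R"
  shows "real (card {i::nat. i < n \<and> \<bar>real i - c\<bar> \<le> R}) \<le> 2 * R + 1"
proof -
  let ?S = "{i::nat. i < n \<and> \<bar>real i - c\<bar> \<le> R}"
  have "int ` ?S \<subseteq> {\<lceil>c - R\<rceil>..\<lfloor>c + R\<rfloor>}"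
  proof
    fix z assume "z \<in> int ` ?S"
    then obtain i where i: "i \<in> ?S" "z = int i" by auto
    then have "c - R \<le> real i" "real i \<le> c + R" by auto
    then show "z \<in> {\<lceil>c - R\<rceil>..\<lfloor>c + R\<rfloor>}" using i
      by (auto simp: ceiling_le_iff le_floor_iff)
  qed
  then have "card (int ` ?S) \<le> card {\<lceil>c - R\<rceil>..\<lfloor>c + R\<rfloor>}" by (intro card_mono) auto
  moreover have "card (int ` ?S) = card ?S" by (intro card_image) auto
  ultimately have le: "card ?S \<le> nat (\<lfloor>c + R\<rfloor> - \<lceil>c - R\<rceil> + 1)" by simp
  have "real_of_int (\<lfloor>c + R\<rfloor> - \<lceil>c - R\<rceil> + 1) \<le> 2 * R + 1"
    unfolding of_int_add of_int_diff of_int_1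
    using of_int_floor_le[of "c + R"] le_of_int_ceiling[of "c - R"] by linarith
  then have "real (nat (\<lfloor>c + R\<rfloor> - \<lceil>c - R\<rceil> + 1)) \<le> 2 * R + 1"
    using assms by (cases "\<lfloor>c + R\<rfloor> - \<lceil>c - R\<rceil> + 1 \<ge> 0") (auto simp: of_nat_nat)
  moreover have "real (card ?S) \<le> real (nat (\<lfloor>c + R\<rfloor> - \<lceil>c - R\<rceil> + 1))" using le by (rule of_nat_mono)
  ultimately show ?thesis by linarith
qed

locale dctx =
  fixes T :: "real \<Rightarrow> real" and l :: nat and \<Lambda> :: "nat \<Rightarrow> nat"
  assumes c1: "condition1 T l \<Lambda>"
begin

abbreviation "bl \<equiv> beta_lo \<Lambda>"
abbreviation "bh \<equiv> beta_hi \<Lambda>"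
definition "Lm = real (Lambda_max l \<Lambda>)"

lemma Lam_ge2: "a \<in> {1..l} \<Longrightarrow> \<Lambda> a \<ge> 2" using c1 unfolding condition1_def by auto
lemma sum_inv: "(\<Sum>j\<in>{1..l}. 1 / real (\<Lambda> j)) = 1" using c1 unfolding condition1_def by auto
lemma l_pos: "l \<ge> 1" using sum_inv by (cases l) auto
lemma T_aff: "a \<in> {1..l} \<Longrightarrow> x \<in> {bl a<..<bh a} \<Longrightarrow> T x = real (\<Lambda> a) * (x - bl a)"
  using c1 unfolding condition1_def by auto

lemma Lam_le: "a \<in> {1..l} \<Longrightarrow> real (\<Lambda> a) \<le> Lm"
  unfolding Lm_def Lambda_max_def by (auto intro: Max_ge)

lemma Lm_ge2: "Lm \<ge> 2" using Lam_le[of 1] Lam_ge2[of 1] l_pos by force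

lemma bl_1: "bl 1 = 0" unfolding beta_lo_def by simp
lemma bh_eq: "a \<ge> 1 \<Longrightarrow> bh a = bl (Suc a)"
  unfolding beta_hi_def beta_lo_def by (simp add: sum.atLeastLessThan_Suc)
lemma bh_l: "bh l = 1"
  using l_pos sum_inv unfolding bh_eq[OF l_pos] beta_lo_def by (simp add: atLeastLessThanSuc_atLeastAtMost)
lemma bl_mono: "a \<le> b \<Longrightarrow> bl a \<le> bl b"
  unfolding beta_lo_def by (intro sum_mono2) auto
lemma bl_ge0: "0 \<le> bl a" unfolding beta_lo_def by (auto intro: sum_nonneg)
lemma bl_lt_bh: "a \<in> {1..l} \<Longrightarrow> bl a < bh a"
  using Lam_ge2[of a] unfolding beta_hi_def by auto
lemma bh_le_bl: "1 \<le> a \<Longrightarrow> a < b \<Longrightarrow> bh a \<le> bl b"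
  using bl_mono[of "Suc a" b] bh_eq by auto
lemma bh_le1: "a \<in> {1..l} \<Longrightarrow> bh a \<le> 1"
  using bl_mono[of "Suc a" "Suc l"] bh_eq[of a] bh_eq[of l] bh_l l_pos by auto
lemma width: "a \<in> {1..l} \<Longrightarrow> real (\<Lambda> a) * (bh a - bl a) = 1"
  using Lam_ge2[of a] unfolding beta_hi_def by auto

definition br :: "real \<Rightarrow> nat" where "br x = Max {a\<in>{1..l}. bl a \<le> x}"

lemma br_props: assumes "0 \<le> x" "x < 1"
  shows "br x \<in> {1..l}" "bl (br x) \<le> x" "x < bh (br x)"
proof -
  let ?S = "{a\<in>{1..l}. bl a \<le> x}"
  have fin: "finite ?S" by auto
  have ne: "?S \<noteq> {}" using l_pos bl_1 assms by force
  have mem: "br x \<in> ?S" unfolding br_def using Max_in[OF fin ne] .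
  then show "br x \<in> {1..l}" "bl (br x) \<le> x" by auto
  show "x < bh (br x)"
  proof (cases "br x < l")
    case True
    show ?thesis
    proof (rule ccontr)
      assume "\<not> x < bh (br x)"
      then have "bl (Suc (br x)) \<le> x" using bh_eq[of "br x"] mem by auto
      then have "Suc (br x) \<in> ?S" using True by auto
      then have "Suc (br x) \<le> br x" unfolding br_def by (intro Max_ge[OF fin])
      then show False by simp
    qed
  next
    case False
    then have "br x = l" using mem by auto
    then show ?thesis using bh_l assms by simp
  qed
qed

lemma br_unique: assumes "a \<in> {1..l}" "bl a \<le> x" "x < bh a" shows "br x = a"
  unfolding br_def
proof (rule Max_eqI)
  fix b assume b: "b \<in> {a\<in>{1..l}. bl a \<le> x}"
  show "b \<le> a"
  proof (rule ccontr)
    assume "\<not> b \<le> a"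
    then have "bh a \<le> bl b" using assms(1) by (intro bh_le_bl) auto
    then show False using b assms by auto
  qed
qed (use assms in auto)

lemma br_mono: assumes "0 \<le> x" "x \<le> y" "y < 1" shows "br x \<le> br y"
proof -
  have "br x \<in> {a\<in>{1..l}. bl a \<le> y}" using br_props[of x] assms by auto
  then show ?thesis unfolding br_def[of y] by (intro Max_ge) auto
qed

definition Tt :: "real \<Rightarrow> real" where
  "Tt x = (if x < 1 then real (\<Lambda> (br x)) * (x - bl (br x)) else 1)"

lemma Tt_branch: assumes "a \<in> {1..l}" "bl a \<le> x" "x < bh a"
  shows "Tt x = real (\<Lambda> a) * (x - bl a)"
proof -
  have "x < 1" using bh_le1[OF assms(1)] assms by auto
  then show ?thesis unfolding Tt_def using br_unique[OF assms] by simp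
qed

lemma Tt_range: assumes "0 \<le> x" "x \<le> 1" shows "Tt x \<in> {0..1}"
proof (cases "x < 1")
  case True
  note b = br_props[OF assms(1) True]
  have "Tt x = real (\<Lambda> (br x)) * (x - bl (br x))" using True unfolding Tt_def by simp
  moreover have "real (\<Lambda> (br x)) * (x - bl (br x)) \<le> real (\<Lambda> (br x)) * (bh (br x) - bl (br x))"
    using b by (intro mult_left_mono) auto
  ultimately show ?thesis using width[OF b(1)] b by auto
qed (auto simp: Tt_def)

lemma dist0: assumes g: "good g L" and x: "0 \<le> x" "x < 1"
  shows "\<bar>g (Tt x) - g 0\<bar> \<le> L * Lm * (x - bl (br x))"
    and "\<bar>g (Tt x) - g 0\<bar> \<le> L * Lm * (bh (br x) - x)"
proof -
  note b = br_props[OF x]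
  let ?a = "br x"
  have Tx: "Tt x = real (\<Lambda> ?a) * (x - bl ?a)" using x unfolding Tt_def by simp
  have TR: "Tt x \<in> {0..1}" using Tt_range x by auto
  have L: "0 \<le> L" using goodD[OF g] by simp
  have "\<bar>g (Tt x) - g 0\<bar> \<le> L * \<bar>Tt x - 0\<bar>" using goodD(2)[OF g TR, of 0] by simp
  also have "\<bar>Tt x - 0\<bar> = real (\<Lambda> ?a) * (x - bl ?a)" using Tx b by simp
  also have "L * \<dots> \<le> L * (Lm * (x - bl ?a))"
    using Lam_le[OF b(1)] b L by (intro mult_left_mono mult_right_mono) auto
  finally show "\<bar>g (Tt x) - g 0\<bar> \<le> L * Lm * (x - bl (br x))" by (simp add: mult_ac)
  have "\<bar>g (Tt x) - g 0\<bar> = \<bar>g (Tt x) - g 1\<bar>" using goodD(4)[OF g] by simp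
  also have "\<dots> \<le> L * \<bar>Tt x - 1\<bar>" using goodD(2)[OF g TR] by simp
  also have "\<bar>Tt x - 1\<bar> = real (\<Lambda> ?a) * (bh ?a - x)"
    using Tx width[OF b(1)] TR by (auto simp: algebra_simps)
  also have "L * \<dots> \<le> L * (Lm * (bh ?a - x))"
    using Lam_le[OF b(1)] b L by (intro mult_left_mono mult_right_mono) auto
  finally show "\<bar>g (Tt x) - g 0\<bar> \<le> L * Lm * (bh (br x) - x)" by (simp add: mult_ac)
qed

lemma lipc: assumes g: "good g L" and xy: "0 \<le> x" "x \<le> y" "y \<le> 1"
  shows "\<bar>g (Tt x) - g (Tt y)\<bar> \<le> Lm * L * (y - x)"
proof -
  have L: "0 \<le> L" using goodD[OF g] by simp
  show ?thesis
  proof (cases "y < 1")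
    case False
    then have y1: "y = 1" using xy by auto
    show ?thesis
    proof (cases "x < 1")
      case False then have "x = y" using y1 xy by linarith
      then show ?thesis by simp
    next
      case True
      have "\<bar>g (Tt x) - g (Tt y)\<bar> = \<bar>g (Tt x) - g 0\<bar>" using y1 goodD(4)[OF g] by (simp add: Tt_def)
      also have "\<dots> \<le> L * Lm * (bh (br x) - x)" by (rule dist0(2)[OF g xy(1) True])
      also have "\<dots> \<le> L * Lm * (y - x)"
        using bh_le1[OF br_props(1)[OF xy(1) True]] y1 L Lm_ge2 by (intro mult_left_mono) auto
      finally show ?thesis by (simp add: mult_ac)
    qed
  next
    case True
    then have x1: "x < 1" using xy by auto
    note bx = br_props[OF xy(1) x1]
    have y0: "0 \<le> y" using xy by auto
    show ?thesis
    proof (cases "br x = br y")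
      case True
      let ?a = "br x"
      have "Tt x = real (\<Lambda> ?a) * (x - bl ?a)" "Tt y = real (\<Lambda> ?a) * (y - bl ?a)"
        using x1 \<open>y < 1\<close> True unfolding Tt_def by auto
      then have d: "Tt y - Tt x = real (\<Lambda> ?a) * (y - x)" by (simp add: algebra_simps)
      have "\<bar>Tt x - Tt y\<bar> = \<bar>Tt y - Tt x\<bar>" by (rule abs_minus_commute)
      also have "\<dots> = real (\<Lambda> ?a) * (y - x)" unfolding d using xy by simp
      finally have "\<bar>Tt x - Tt y\<bar> = real (\<Lambda> ?a) * (y - x)" .
      moreover have "\<bar>g (Tt x) - g (Tt y)\<bar> \<le> L * \<bar>Tt x - Tt y\<bar>"
        using goodD(2)[OF g] Tt_range xy by auto
      moreover have "L * (real (\<Lambda> ?a) * (y - x)) \<le> L * (Lm * (y - x))"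
        using Lam_le[OF bx(1)] L xy by (intro mult_left_mono mult_right_mono) auto
      ultimately show ?thesis by (simp add: mult_ac)
    next
      case False
      then have "br x < br y" using br_mono[OF xy(1,2) \<open>y < 1\<close>] by simp
      then have bb: "bh (br x) \<le> bl (br y)" using bx(1) by (intro bh_le_bl) auto
      have "\<bar>g (Tt x) - g (Tt y)\<bar> \<le> \<bar>g (Tt x) - g 0\<bar> + \<bar>g (Tt y) - g 0\<bar>" by linarith
      also have "\<dots> \<le> L * Lm * (bh (br x) - x) + L * Lm * (y - bl (br y))"
        using dist0(2)[OF g xy(1) x1] dist0(1)[OF g y0 \<open>y < 1\<close>] by linarith
      also have "\<dots> = L * Lm * ((bh (br x) - x) + (y - bl (br y)))" by (simp add: algebra_simps)
      also have "\<dots> \<le> L * Lm * (y - x)"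
        using bb L Lm_ge2 by (intro mult_left_mono) auto
      finally show ?thesis by (simp add: mult_ac)
    qed
  qed
qed

lemma comp_good: assumes g: "good g L" shows "good (\<lambda>x. g (Tt x)) (Lm * L)"
  unfolding good_def
proof (intro conjI ballI)
  show "0 \<le> Lm * L" using goodD(1)[OF g] Lm_ge2 by simp
  fix x y :: real assume x: "x \<in> {0..1}" and y: "y \<in> {0..1}"
  show "\<bar>g (Tt x) - g (Tt y)\<bar> \<le> Lm * L * \<bar>x - y\<bar>"
  proof (cases "x \<le> y")
    case True then show ?thesis using lipc[OF g, of x y] x y by auto
  next
    case False then show ?thesis using lipc[OF g, of y x] x y by (auto simp: abs_minus_commute)
  qed
next
  fix x :: real assume "x \<in> {0..1}"
  then show "\<bar>g (Tt x)\<bar> \<le> 1" using goodD(3)[OF g] Tt_range by auto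
next
  have "Tt 0 = real (\<Lambda> 1) * (0 - bl 1)"
    by (rule Tt_branch) (use bl_1 bl_lt_bh[of 1] l_pos in auto)
  then have "Tt 0 = 0" using bl_1 by simp
  moreover have "Tt 1 = 1" by (simp add: Tt_def)
  ultimately show "g (Tt 0) = g (Tt 1)" using goodD(4)[OF g] by simp
qed

end


definition Sg :: "nat \<Rightarrow> (real \<Rightarrow> real) \<Rightarrow> complex mat" where
  "Sg n g = dmat n (\<lambda>i. of_real (g (xs n i)))"

lemma xs_range: "n > 0 \<Longrightarrow> i < n \<Longrightarrow> xs n i \<in> {0..1}"
  unfolding xs_def by (auto simp: divide_simps)

locale qctx = dctx T l \<Lambda> + uctx n U chi
  for T l \<Lambda> n U chi +
  assumes npos: "n > 0"
    and bmult: "\<And>a. a \<in> {1..l} \<Longrightarrow> (\<exists>q::nat. bl a = real q / real n) \<and> (\<exists>q::nat. bh a = real q / real n)"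
    and modu: "\<And>i j. i < n \<Longrightarrow> j < n \<Longrightarrow> (cmod (U $$ (i,j)))^2 = measure lebesgue (cell n j \<inter> T -` cell n i) / (1 / real n)"
begin

lemma cell_branch: assumes j: "j < n"
  shows "br (real j / real n) \<in> {1..l}" "bl (br (real j / real n)) \<le> real j / real n"
    "real (j+1) / real n \<le> bh (br (real j / real n))"
proof -
  have x: "0 \<le> real j / real n" "real j / real n < 1" using j npos by (auto simp: divide_simps)
  note b = br_props[OF x]
  show "br (real j / real n) \<in> {1..l}" "bl (br (real j / real n)) \<le> real j / real n" using b by auto
  obtain q :: nat where q: "bh (br (real j / real n)) = real q / real n" using bmult[OF b(1)] by blast
  have "real j / real n < real q / real n" using b(3) q by simp
  then have "real j < real q" using npos by (simp add: divide_less_cancel)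
  then have "j < q" by simp
  then have "real (j+1) \<le> real q" by simp
  then show "real (j+1) / real n \<le> bh (br (real j / real n))" unfolding q using npos
    by (simp add: divide_right_mono)
qed

lemma xs_branch: assumes j: "j < n"
  defines "a \<equiv> br (real j / real n)"
  shows "bl a < xs n j" "xs n j < bh a" "Tt (xs n j) = real (\<Lambda> a) * (xs n j - bl a)"
proof -
  note cb = cell_branch[OF j, folded a_def]
  have "real j / real n < xs n j" "xs n j < real (j+1) / real n"
    using npos unfolding xs_def by (auto simp: divide_simps)
  then show "bl a < xs n j" "xs n j < bh a" using cb by auto
  then show "Tt (xs n j) = real (\<Lambda> a) * (xs n j - bl a)"
    by (intro Tt_branch cb(1)) auto
qed

lemma geo: assumes i: "i < n" and j: "j < n" and U0: "U $$ (i,j) \<noteq> 0"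
  shows "\<bar>xs n i - Tt (xs n j)\<bar> \<le> (Lm + 1) / (2 * real n)"
proof -
  define a where "a = br (real j / real n)"
  note cb = cell_branch[OF j, folded a_def] and xb = xs_branch[OF j, folded a_def]
  define S where "S = cell n j \<inter> T -` cell n i"
  have "measure lebesgue S \<noteq> 0"
  proof
    assume "measure lebesgue S = 0"
    then have "(cmod (U $$ (i,j)))^2 = 0" using modu[OF i j] unfolding S_def by simp
    then show False using U0 by simp
  qed
  then obtain x where x: "x \<in> S" "x \<noteq> bl a" "x \<noteq> bh a"
  proof -
    assume h: "\<And>x. x \<in> S \<Longrightarrow> x \<noteq> bl a \<Longrightarrow> x \<noteq> bh a \<Longrightarrow> thesis"
    show thesis
    proof (rule ccontr)
      assume "\<not> thesis"
      then have "S \<subseteq> {bl a, bh a}" using h by blast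
      then have "negligible S" by (rule negligible_subset[rotated]) auto
      then have "measure lebesgue S = 0" by (rule negligible_imp_measure0)
      then show False using \<open>measure lebesgue S \<noteq> 0\<close> by simp
    qed
  qed
  have xc: "x \<in> cell n j" and Tx: "T x \<in> cell n i" using x(1) unfolding S_def by auto
  have "real j / real n \<le> x" "x \<le> real (j+1) / real n" using xc unfolding cell_def by auto
  then have "bl a < x" "x < bh a" using cb x(2,3) by auto
  then have Txe: "T x = real (\<Lambda> a) * (x - bl a)" by (intro T_aff cb(1)) auto
  have d1: "\<bar>T x - xs n i\<bar> \<le> 1 / (2 * real n)" by (rule xs_in[OF npos Tx])
  have d2: "\<bar>x - xs n j\<bar> \<le> 1 / (2 * real n)" by (rule xs_in[OF npos xc])
  have "\<bar>T x - Tt (xs n j)\<bar> = real (\<Lambda> a) * \<bar>x - xs n j\<bar>"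
  proof -
    have "T x - Tt (xs n j) = real (\<Lambda> a) * (x - xs n j)" unfolding Txe xb(3) by (simp add: algebra_simps)
    then show ?thesis by (simp add: abs_mult)
  qed
  also have "\<dots> \<le> Lm * (1 / (2 * real n))"
    using Lam_le[OF cb(1)] d2 by (intro mult_mono) auto
  finally have d3: "\<bar>T x - Tt (xs n j)\<bar> \<le> Lm / (2 * real n)" by simp
  have "\<bar>xs n i - Tt (xs n j)\<bar> \<le> \<bar>T x - xs n i\<bar> + \<bar>T x - Tt (xs n j)\<bar>" by linarith
  also have "\<dots> \<le> 1 / (2 * real n) + Lm / (2 * real n)" using d1 d3 by linarith
  also have "\<dots> = (Lm + 1) / (2 * real n)" by (simp add: add_divide_distrib)
  finally show ?thesis .
qed

lemma card_U: assumes j: "j < n" shows "real (card {i. i < n \<and> U $$ (i,j) \<noteq> 0}) \<le> Lm + 2"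
proof -
  let ?c = "real n * Tt (xs n j) - 1/2" and ?R = "(Lm + 1) / 2"
  have sub: "{i. i < n \<and> U $$ (i,j) \<noteq> 0} \<subseteq> {i::nat. i < n \<and> \<bar>real i - ?c\<bar> \<le> ?R}"
  proof safe
    fix i assume i: "i < n" and U0: "U $$ (i,j) \<noteq> 0"
    have g: "\<bar>xs n i - Tt (xs n j)\<bar> \<le> (Lm + 1) / (2 * real n)" by (rule geo[OF i j U0])
    have "real i - ?c = real n * (xs n i - Tt (xs n j))" using npos unfolding xs_def by (simp add: field_simps)
    then have "\<bar>real i - ?c\<bar> = real n * \<bar>xs n i - Tt (xs n j)\<bar>" by (simp add: abs_mult)
    also have "\<dots> \<le> real n * ((Lm + 1) / (2 * real n))" using g by (intro mult_left_mono) auto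
    also have "\<dots> = ?R" using npos by simp
    finally show "\<bar>real i - ?c\<bar> \<le> ?R" .
  qed
  have "card {i. i < n \<and> U $$ (i,j) \<noteq> 0} \<le> card {i::nat. i < n \<and> \<bar>real i - ?c\<bar> \<le> ?R}"
    by (intro card_mono sub) auto
  then have "real (card {i. i < n \<and> U $$ (i,j) \<noteq> 0}) \<le> real (card {i::nat. i < n \<and> \<bar>real i - ?c\<bar> \<le> ?R})"
    by simp
  also have "\<dots> \<le> 2 * ?R + 1" by (rule card_window) (use Lm_ge2 in simp)
  also have "2 * ?R + 1 = Lm + 2" by simp
  finally show ?thesis .
qed

definition "cE = (Lm + 1) * (Lm + 2) / 2"

lemma cE_pos: "0 \<le> cE" unfolding cE_def using Lm_ge2 by simp

lemma egorov: assumes g: "good g L"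
  shows "opb n (Uh * Sg n g * U - Sg n (\<lambda>x. g (Tt x))) (L * cE / real n)"
proof -
  have L: "0 \<le> L" using goodD(1)[OF g] .
  let ?e = "L * (Lm + 1) / (2 * real n)"
  have "opb n (Uh * dmat n (\<lambda>i. of_real (g (xs n i))) * U - dmat n (\<lambda>i. of_real (g (Tt (xs n i))))) (?e * sqrt (Lm + 2))"
  proof (rule egorov_abs)
    show "0 \<le> ?e" using L Lm_ge2 npos by simp
    show "0 \<le> Lm + 2" using Lm_ge2 by simp
    show "real (card {i. i < n \<and> U $$ (i,j) \<noteq> 0}) \<le> Lm + 2" if "j < n" for j using card_U[OF that] .
    fix i j assume i: "i < n" and j: "j < n" and U0: "U $$ (i,j) \<noteq> 0"
    have "\<bar>g (xs n i) - g (Tt (xs n j))\<bar> \<le> L * \<bar>xs n i - Tt (xs n j)\<bar>"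
      using goodD(2)[OF g] xs_range[OF npos i] Tt_range xs_range[OF npos j] by auto
    also have "\<dots> \<le> L * ((Lm + 1) / (2 * real n))" using geo[OF i j U0] L by (intro mult_left_mono) auto
    finally show "\<bar>g (xs n i) - g (Tt (xs n j))\<bar> \<le> ?e" by simp
  qed
  moreover have "?e * sqrt (Lm + 2) \<le> L * cE / real n"
  proof -
    have "sqrt (Lm + 2) \<le> sqrt ((Lm + 2)^2)"
      using Lm_ge2 by (intro real_sqrt_le_mono) (simp add: power2_eq_square)
    also have "\<dots> = Lm + 2" using Lm_ge2 by simp
    finally have sq: "sqrt (Lm + 2) \<le> Lm + 2" .
    have "?e * sqrt (Lm + 2) \<le> ?e * (Lm + 2)"
      using L Lm_ge2 npos by (intro mult_left_mono sq) auto
    also have "\<dots> = L * cE / real n" unfolding cE_def by (simp add: field_simps)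
    finally show ?thesis .
  qed
  ultimately show ?thesis unfolding Sg_def by (rule opb_mono)
qed

end


lemma good_mono: "good g L \<Longrightarrow> L \<le> L' \<Longrightarrow> good g L'"
  unfolding good_def by (meson abs_ge_zero mult_right_mono order_trans)

lemma good_mult: assumes f: "good f Lf" and h: "good h Lh" shows "good (\<lambda>x. f x * h x) (Lf + Lh)"
  unfolding good_def
proof (intro conjI ballI)
  show "0 \<le> Lf + Lh" using goodD(1)[OF f] goodD(1)[OF h] by simp
  fix x y :: real assume x: "x \<in> {0..1}" and y: "y \<in> {0..1}"
  have "\<bar>f x * h x - f y * h y\<bar> = \<bar>f x * (h x - h y) + h y * (f x - f y)\<bar>" by (simp add: algebra_simps)
  also have "\<dots> \<le> \<bar>f x\<bar> * \<bar>h x - h y\<bar> + \<bar>h y\<bar> * \<bar>f x - f y\<bar>" by (simp add: abs_mult[symmetric] abs_triangle_ineq)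
  also have "\<dots> \<le> 1 * (Lh * \<bar>x - y\<bar>) + 1 * (Lf * \<bar>x - y\<bar>)"
    using goodD[OF f] goodD[OF h] x y by (intro add_mono mult_mono) auto
  finally show "\<bar>f x * h x - f y * h y\<bar> \<le> (Lf + Lh) * \<bar>x - y\<bar>" by (simp add: algebra_simps)
next
  fix x :: real assume x: "x \<in> {0..1}"
  have "\<bar>f x * h x\<bar> \<le> 1 * 1" unfolding abs_mult using goodD[OF f] goodD[OF h] x by (intro mult_mono) auto
  then show "\<bar>f x * h x\<bar> \<le> 1" by simp
next
  show "f 0 * h 0 = f 1 * h 1" using goodD(4)[OF f] goodD(4)[OF h] by simp
qed

lemma good_const1: "good (\<lambda>x. 1) 0" unfolding good_def by simp

locale fctx = qctx T l \<Lambda> n U chi + pctx l chi K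
  for T l \<Lambda> n U chi K +
  assumes per: "\<And>a x. a \<in> {1..l} \<Longrightarrow> chi a (x + 1) = chi a x"
begin

definition sig :: "nat set \<Rightarrow> real \<Rightarrow> real" where "sig A x = (\<Sum>a\<in>A. (chi a x)^2)"

lemma sig_good: assumes "A \<subseteq> {1..l}" shows "good (sig A) (2 * K * real l)"
  unfolding good_def
proof (intro conjI ballI)
  show "0 \<le> 2 * K * real l" using Kpos by simp
  fix x y :: real
  have "\<bar>sig A x - sig A y\<bar> = \<bar>\<Sum>a\<in>A. (chi a x - chi a y) * (chi a x + chi a y)\<bar>"
    unfolding sig_def by (simp add: sum_subtractf[symmetric] power2_eq_square algebra_simps)
  also have "\<dots> \<le> (\<Sum>a\<in>A. \<bar>(chi a x - chi a y) * (chi a x + chi a y)\<bar>)" by (rule sum_abs)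
  also have "\<dots> \<le> (\<Sum>a\<in>A. (K * \<bar>x - y\<bar>) * 2)"
  proof (rule sum_mono)
    fix a assume a: "a \<in> A"
    then have a': "a \<in> {1..l}" using assms by auto
    have "\<bar>chi a x + chi a y\<bar> \<le> 2" using chi_bound[OF a', of x] chi_bound[OF a', of y] by linarith
    then show "\<bar>(chi a x - chi a y) * (chi a x + chi a y)\<bar> \<le> (K * \<bar>x - y\<bar>) * 2"
      unfolding abs_mult using lip[OF a'] Kpos by (intro mult_mono) auto
  qed
  also have "\<dots> = real (card A) * (2 * K) * \<bar>x - y\<bar>" by (simp add: mult_ac)
  also have "\<dots> \<le> real l * (2 * K) * \<bar>x - y\<bar>"
    using card_mono[OF _ assms] Kpos by (intro mult_right_mono) auto
  finally show "\<bar>sig A x - sig A y\<bar> \<le> 2 * K * real l * \<bar>x - y\<bar>" by (simp add: mult_ac)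
next
  fix x :: real
  have "0 \<le> sig A x" unfolding sig_def by (auto intro: sum_nonneg)
  moreover have "sig A x \<le> sig {1..l} x" unfolding sig_def using assms by (intro sum_mono2) auto
  ultimately show "\<bar>sig A x\<bar> \<le> 1" using sum1 unfolding sig_def by simp
next
  have "\<And>a. a \<in> A \<Longrightarrow> chi a 1 = chi a 0" using per[of _ 0] assms by auto
  then show "sig A 0 = sig A 1" unfolding sig_def by (intro sum.cong) auto
qed

lemma sig_all: "sig {1..l} x = 1" unfolding sig_def using sum1 .

definition stp :: "nat set \<Rightarrow> complex mat \<Rightarrow> complex mat" where
  "stp A X = phi n p A (Uh * X * U)"

lemma stp_carrier[simp]: "stp A X \<in> carrier_mat n n" unfolding stp_def by simp

lemma Sg_carrier[simp]: "Sg n g \<in> carrier_mat n n" unfolding Sg_def by simp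

lemma opb_conj: assumes "opb n X c" shows "opb n (Uh * X * U) c"
proof -
  have "opb n (Uh * X * U) (1 * c * 1)"
    by (intro opb_mult opb_unitary unitary_Uh unitary_U assms)
  then show ?thesis by simp
qed

lemma conj_minus: assumes "X \<in> carrier_mat n n" "Y \<in> carrier_mat n n"
  shows "Uh * X * U - Uh * Y * U = Uh * (X - Y) * U"
proof -
  have "Uh * (X - Y) = Uh * X - Uh * Y" using assms by (intro mult_minus_distrib_mat[of _ n n]) auto
  moreover have "(Uh * X - Uh * Y) * U = Uh * X * U - Uh * Y * U"
    using assms by (intro minus_mult_distrib_mat[of _ n n]) auto
  ultimately show ?thesis by simp
qed

lemma tele3: fixes A B C D :: "complex mat" assumes "A \<in> carrier_mat n n" "B \<in> carrier_mat n n" "C \<in> carrier_mat n n" "D \<in> carrier_mat n n"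
  shows "A - D = ((A - B) + (B - C)) + (C - D)"
  by (rule eq_matI) (use assms in \<open>auto simp: algebra_simps\<close>)

lemma tele2: fixes A B C :: "complex mat" assumes "A \<in> carrier_mat n n" "B \<in> carrier_mat n n" "C \<in> carrier_mat n n"
  shows "A - C = (A - B) + (B - C)"
  by (rule eq_matI) (use assms in \<open>auto simp: algebra_simps\<close>)

lemma phi_S_approx: assumes A: "A \<subseteq> {1..l}" and h: "\<And>x. x \<in> {0..1} \<Longrightarrow> \<bar>h x\<bar> \<le> 1"
  shows "opb n (phi n p A (Sg n h) - Sg n (\<lambda>x. sig A x * h x)) (real l * (2 * K) / real n)"
proof -
  have "phi n p A (Sg n h) - Sg n (\<lambda>x. sig A x * h x)
     = dmat n (\<lambda>i. of_real ((\<Sum>a\<in>A. (p a i)^2) - sig A (xs n i)) * of_real (h (xs n i)))"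
    unfolding Sg_def phi_dmat dmat_minus by (simp add: algebra_simps)
  moreover have "opb n (dmat n (\<lambda>i. of_real ((\<Sum>a\<in>A. (p a i)^2) - sig A (xs n i)) * of_real (h (xs n i)))) (real l * (2 * K) / real n)"
  proof (rule opb_dmat)
    fix i assume i: "i < n"
    have "\<bar>(\<Sum>a\<in>A. (p a i)^2) - sig A (xs n i)\<bar> = \<bar>\<Sum>a\<in>A. ((p a i)^2 - (chi a (xs n i))^2)\<bar>"
      unfolding sig_def by (simp add: sum_subtractf)
    also have "\<dots> \<le> (\<Sum>a\<in>A. \<bar>(p a i)^2 - (chi a (xs n i))^2\<bar>)" by (rule sum_abs)
    also have "\<dots> \<le> (\<Sum>a\<in>A. 2 * K / real n)"
      using p_sq_approx[OF npos] A by (intro sum_mono) auto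
    also have "\<dots> = real (card A) * (2 * K / real n)" by simp
    also have "\<dots> \<le> real l * (2 * K / real n)"
      using card_mono[OF _ A] Kpos npos by (intro mult_right_mono) auto
    finally have e1: "\<bar>(\<Sum>a\<in>A. (p a i)^2) - sig A (xs n i)\<bar> \<le> real l * (2 * K) / real n" by simp
    have "cmod (of_real ((\<Sum>a\<in>A. (p a i)^2) - sig A (xs n i)) * of_real (h (xs n i)))
       = \<bar>(\<Sum>a\<in>A. (p a i)^2) - sig A (xs n i)\<bar> * \<bar>h (xs n i)\<bar>" by (simp only: norm_mult norm_of_real)
    also have "\<dots> \<le> (real l * (2 * K) / real n) * 1"
      using e1 h[OF xs_range[OF npos i]] by (intro mult_mono) auto
    finally show "cmod (of_real ((\<Sum>a\<in>A. (p a i)^2) - sig A (xs n i)) * of_real (h (xs n i))) \<le> real l * (2 * K) / real n" by simp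
  qed (use Kpos npos in simp)
  ultimately show ?thesis by simp
qed

lemma step_approx:
  assumes A: "A \<subseteq> {1..l}" and X: "X \<in> carrier_mat n n" and XD: "opb n (X - Sg n g) D" and g: "good g Lg"
  shows "opb n (stp A X - Sg n (\<lambda>x. sig A x * g (Tt x))) (D + Lg * cE / real n + real l * (2 * K) / real n)"
proof -
  have finA: "finite A" using A finite_subset by blast
  have sq: "\<And>i. i < n \<Longrightarrow> (\<Sum>a\<in>A. (p a i)^2) \<le> 1" using p_sq_sub[OF npos A] by blast
  let ?P1 = "stp A X" and ?P2 = "phi n p A (Uh * Sg n g * U)" and ?P3 = "phi n p A (Sg n (\<lambda>x. g (Tt x)))"
    and ?P4 = "Sg n (\<lambda>x. sig A x * g (Tt x))"
  have t1: "opb n (?P1 - ?P2) D"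
  proof -
    have "?P1 - ?P2 = phi n p A (Uh * X * U - Uh * Sg n g * U)"
      unfolding stp_def by (rule phi_minus[symmetric]) (use X in auto)
    also have "\<dots> = phi n p A (Uh * (X - Sg n g) * U)"
      by (simp only: conj_minus[OF X Sg_carrier])
    finally have "?P1 - ?P2 = phi n p A (Uh * (X - Sg n g) * U)" .
    moreover have "opb n (phi n p A (Uh * (X - Sg n g) * U)) D"
      by (intro phi_contract opb_conj XD finA sq)
    ultimately show ?thesis by simp
  qed
  have t2: "opb n (?P2 - ?P3) (Lg * cE / real n)"
  proof -
    have "?P2 - ?P3 = phi n p A (Uh * Sg n g * U - Sg n (\<lambda>x. g (Tt x)))"
      by (rule phi_minus[symmetric]) auto
    moreover have "opb n (phi n p A (Uh * Sg n g * U - Sg n (\<lambda>x. g (Tt x)))) (Lg * cE / real n)"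
      by (intro phi_contract egorov g finA sq)
    ultimately show ?thesis by simp
  qed
  have t3: "opb n (?P3 - ?P4) (real l * (2 * K) / real n)"
    by (rule phi_S_approx[OF A]) (use goodD(3)[OF comp_good[OF g]] in auto)
  have "opb n (((?P1 - ?P2) + (?P2 - ?P3)) + (?P3 - ?P4)) (D + Lg * cE / real n + real l * (2 * K) / real n)"
    by (intro opb_add t1 t2 t3)
  then show ?thesis by (subst tele3[of _ ?P2 ?P3]) auto
qed

end


context fctx begin

primrec Zf :: "nat set list \<Rightarrow> complex mat" where
  "Zf [] = 1\<^sub>m n"
| "Zf (A # As) = stp A (Zf As)"

primrec gf :: "nat set list \<Rightarrow> real \<Rightarrow> real" where
  "gf [] = (\<lambda>x. 1)"
| "gf (A # As) = (\<lambda>x. sig A x * gf As (Tt x))"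

lemma Zf_carrier[simp]: "Zf As \<in> carrier_mat n n" by (cases As) auto

definition "Bc = 2 * K * real l * cE + 2 * K * real l"

lemma KlcE: "0 \<le> K * real l" "0 \<le> cE" "0 \<le> Bc"
  using Kpos cE_pos unfolding Bc_def by auto

lemma ineq_a: assumes t: "1 \<le> t"
  shows "2 * K * real l + Lm * (2 * K * real l * (t - 1)) \<le> 2 * K * real l * (Lm * t - 1)"
proof -
  have "2 * K * real l + Lm * (2 * K * real l * (t - 1)) = 2 * K * real l * (Lm * t - 1) - (2 * K * real l) * (Lm - 2)"
    by (simp add: algebra_simps)
  also have "\<dots> \<le> 2 * K * real l * (Lm * t - 1)" using KlcE Lm_ge2 by simp
  finally show ?thesis .
qed

lemma ineq_b: assumes t: "1 \<le> t"
  shows "Bc * (t - 1) + (2 * K * real l * (t - 1)) * cE + real l * (2 * K) \<le> Bc * (Lm * t - 1)"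
proof -
  have "Bc * (Lm * t - 1) - (Bc * (t - 1) + (2 * K * real l * (t - 1)) * cE + real l * (2 * K))
      = Bc * t * (Lm - 2) + (2 * K * real l) * (t - 1) + (2 * K * real l * cE)"
    unfolding Bc_def by (simp add: algebra_simps)
  also have "\<dots> \<ge> 0" using KlcE Lm_ge2 t Kpos by (intro add_nonneg_nonneg mult_nonneg_nonneg) auto
  finally show ?thesis by simp
qed

lemma iter:
  assumes "\<forall>A\<in>set As. A \<subseteq> {1..l}"
  shows "opb n (Zf As - Sg n (gf As)) (Bc * (Lm ^ length As - 1) / real n) \<and> good (gf As) (2 * K * real l * (Lm ^ length As - 1))"
  using assms
proof (induction As)
  case Nil
  have "Zf [] - Sg n (gf []) = dmat n (\<lambda>i. 0)"
    unfolding Sg_def by (simp add: dmat_one[symmetric] dmat_minus)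
  moreover have "opb n (dmat n (\<lambda>i. 0)) 0" by (rule opb_dmat) auto
  ultimately show ?case using good_const1 by simp
next
  case (Cons A As)
  let ?t = "Lm ^ length As"
  have t: "1 \<le> ?t" using Lm_ge2 by (simp add: one_le_power)
  have A: "A \<subseteq> {1..l}" using Cons.prems by simp
  from Cons.IH Cons.prems have IH: "opb n (Zf As - Sg n (gf As)) (Bc * (?t - 1) / real n)"
    and gI: "good (gf As) (2 * K * real l * (?t - 1))" by auto
  have "opb n (stp A (Zf As) - Sg n (\<lambda>x. sig A x * gf As (Tt x)))
     (Bc * (?t - 1) / real n + (2 * K * real l * (?t - 1)) * cE / real n + real l * (2 * K) / real n)"
    by (rule step_approx[OF A Zf_carrier IH gI])
  moreover have "Bc * (?t - 1) / real n + (2 * K * real l * (?t - 1)) * cE / real n + real l * (2 * K) / real n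
      \<le> Bc * (Lm * ?t - 1) / real n"
    using ineq_b[OF t] npos by (simp add: add_divide_distrib[symmetric] divide_right_mono)
  ultimately have o: "opb n (Zf (A # As) - Sg n (gf (A # As))) (Bc * (Lm ^ length (A # As) - 1) / real n)"
    by (auto intro: opb_mono)
  have "good (gf (A # As)) (2 * K * real l + Lm * (2 * K * real l * (?t - 1)))"
    unfolding gf.simps by (rule good_mult[OF sig_good[OF A] comp_good[OF gI]])
  then have "good (gf (A # As)) (2 * K * real l * (Lm ^ length (A # As) - 1))"
    by (rule good_mono) (use ineq_a[OF t] in simp)
  with o show ?case by simp
qed

lemma Pword_nil: "Pword n U chi [] = 1\<^sub>m n" unfolding Pword_def by simp

lemma Y_Zf: "mat_adjoint (Pword n U chi w) * Pword n U chi w = Zf (map (\<lambda>a. {a}) w)"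
proof (induction w)
  case Nil then show ?case by (simp add: Pword_nil)
next
  case (Cons a w)
  show ?case unfolding Y_Cons Cons by (simp add: stp_def)
qed

lemma W_Zf: "Wm n U chi l e j = Zf (replicate j {1..l} @ map (\<lambda>a. {a}) e)"
  by (induction j) (simp_all add: Y_Zf stp_def)

end


lemma tele_sum: "\<bar>f 0 - f r\<bar> \<le> (\<Sum>j<r. \<bar>f (Suc j) - f j\<bar>)" for f :: "nat \<Rightarrow> real"
proof (induction r)
  case (Suc r) then show ?case by simp
qed simp

lemma geom_sum: assumes "(2::real) \<le> L" shows "(\<Sum>j<r. L ^ Suc (j + m)) \<le> 2 * L ^ (r + m)"
proof (induction r)
  case 0 then show ?case using assms by simp
next
  case (Suc r)
  have "(\<Sum>j<Suc r. L ^ Suc (j + m)) = (\<Sum>j<r. L ^ Suc (j + m)) + L ^ Suc (r + m)" by simp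
  also have "\<dots> \<le> 2 * L ^ (r + m) + L ^ Suc (r + m)" using Suc by simp
  also have "2 * L ^ (r + m) \<le> L * L ^ (r + m)" using assms by (intro mult_right_mono) auto
  finally show ?case by simp
qed

context uctx begin

lemma sum_Pd_eq: assumes "y \<in> carrier_vec n"
  shows "(\<Sum>a\<in>S. sqnorm (Pd n q a *\<^sub>v y)) = (\<Sum>i<n. (\<Sum>a\<in>S. (q a i)^2) * (cmod (y $ i))^2)"
proof -
  have "(\<Sum>a\<in>S. sqnorm (Pd n q a *\<^sub>v y)) = (\<Sum>a\<in>S. \<Sum>i<n. (q a i)^2 * (cmod (y $ i))^2)"
    unfolding Pd_def using assms by (simp add: sqnorm_dmat)
  also have "\<dots> = (\<Sum>i<n. (\<Sum>a\<in>S. (q a i)^2) * (cmod (y $ i))^2)"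
    by (simp add: sum.swap[of _ S] sum_distrib_right)
  finally show ?thesis .
qed

lemma opb_Pword: assumes "\<And>a i. a \<in> set w \<Longrightarrow> i < n \<Longrightarrow> \<bar>p a i\<bar> \<le> 1"
  shows "opb n (Pword n U chi w) 1"
  using assms
proof (induction w)
  case Nil
  have "opb n (dmat n (\<lambda>i. 1)) 1" by (rule opb_dmat) auto
  then show ?case by (simp add: Pword_def dmat_one)
next
  case (Cons a w)
  have P: "opb n (Pd n p a) 1" unfolding Pd_def by (rule opb_dmat) (use Cons.prems in auto)
  have "opb n (Uh * Pword n U chi w * U * Pd n p a) (1 * 1 * 1 * 1)"
    by (intro opb_mult opb_unitary unitary_Uh unitary_U P Cons.IH) (use Cons.prems in auto)
  then show ?case unfolding Pword_Cons by simp
qed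

end

context fctx begin

lemma p_le1: "a \<in> {1..l} \<Longrightarrow> \<bar>p a i\<bar> \<le> 1" using p_bound[OF npos] by blast

context
  fixes \<psi> :: "complex vec" and \<mu> :: complex
  assumes psi: "\<psi> \<in> carrier_vec n" and nrm: "sqnorm \<psi> = 1" and eig: "U *\<^sub>v \<psi> = \<mu> \<cdot>\<^sub>v \<psi>"
begin

lemma mu1: "cmod \<mu> = 1"
proof -
  have "sqnorm (U *\<^sub>v \<psi>) = sqnorm \<psi>" using unitary_norm[OF unitary_U psi] .
  then have "(cmod \<mu>)^2 = 1" using nrm unfolding eig sqnorm_smult by simp
  then show ?thesis using norm_ge_zero[of \<mu>] by (simp add: power2_eq_1_iff)
qed

lemma cnj_mu: "cnj \<mu> * \<mu> = 1"
  using complex_norm_square[of \<mu>] mu1 by (simp add: mult.commute)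

lemma qf_eig: assumes W: "W \<in> carrier_mat n n" shows "qf \<psi> (Uh * W * U) = qf \<psi> W"
proof -
  have "qf \<psi> (Uh * W * U) = qf (U *\<^sub>v \<psi>) W" using qf_conj[OF W psi] by simp
  also have "\<dots> = ip (\<mu> \<cdot>\<^sub>v \<psi>) (\<mu> \<cdot>\<^sub>v (W *\<^sub>v \<psi>))"
    unfolding qf_def eig using W psi by (simp add: mult_mat_vec)
  also have "\<dots> = cnj \<mu> * \<mu> * qf \<psi> W" unfolding qf_def using W psi
    by (simp add: ip_smult_left ip_smult_right)
  finally show ?thesis using cnj_mu by simp
qed

lemma sqnorm_eig: assumes A: "A \<in> carrier_mat n n" shows "sqnorm (A *\<^sub>v (U *\<^sub>v \<psi>)) = sqnorm (A *\<^sub>v \<psi>)"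
  unfolding eig using A psi mu1 by (simp add: mult_mat_vec sqnorm_smult)

lemma pull_Re: "mu_hat_pull l n U chi \<psi> j e = Re (qf \<psi> (Wm n U chi l e j))"
proof -
  have "of_real (mu_hat_pull l n U chi \<psi> j e) = qf \<psi> (Wm n U chi l e j)"
    unfolding mu_hat_pull_def mu_hat_def using pull_qf[OF psi] .
  then show ?thesis by (metis Re_complex_of_real)
qed

lemma pull0: "mu_hat_pull l n U chi \<psi> 0 e = mu_hat n U chi \<psi> e"
  unfolding mu_hat_pull_def by (simp add: words_0)

lemma step_nonstar: assumes e: "e \<in> words l m"
  shows "\<bar>mu_hat_pull l n U chi \<psi> (Suc j) e - mu_hat_pull l n U chi \<psi> j e\<bar> \<le> 2 * Bc * Lm ^ Suc (j + m) / real n"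
proof -
  define As where "As = replicate j {1..l} @ map (\<lambda>a. {a}) e"
  have As: "\<forall>A\<in>set As. A \<subseteq> {1..l}" using e unfolding As_def words_def by auto
  have len: "length As = j + m" using e unfolding As_def words_def by simp
  let ?t = "Lm ^ (j + m)"
  have t: "1 \<le> ?t" using Lm_ge2 by (simp add: one_le_power)
  define Z where "Z = Zf As"
  define g where "g = gf As"
  define Lg where "Lg = 2 * K * real l * (?t - 1)"
  define D where "D = Bc * (?t - 1) / real n"
  have Z: "Z \<in> carrier_mat n n" unfolding Z_def by simp
  have ZD: "opb n (Z - Sg n g) D" and gg: "good g Lg"
    using iter[OF As] unfolding Z_def g_def D_def Lg_def len by auto
  define V where "V = Uh * Z * U"
  define G where "G = Sg n (\<lambda>x. g (Tt x))"
  have V: "V \<in> carrier_mat n n" unfolding V_def using Z by simp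
  have G: "G \<in> carrier_mat n n" unfolding G_def by simp
  have WZ: "Wm n U chi l e j = Z" unfolding Z_def As_def W_Zf ..
  have WZ': "Wm n U chi l e (Suc j) = phi n p {1..l} V" unfolding V_def using WZ by simp
  have o1: "opb n (V - G) (D + Lg * cE / real n)"
  proof -
    have "V - G = (V - Uh * Sg n g * U) + (Uh * Sg n g * U - G)"
      by (rule tele2) (use V G in auto)
    also have "V - Uh * Sg n g * U = Uh * (Z - Sg n g) * U"
      unfolding V_def by (rule conj_minus[OF Z Sg_carrier])
    finally have eq: "V - G = Uh * (Z - Sg n g) * U + (Uh * Sg n g * U - G)" .
    show ?thesis unfolding eq by (intro opb_add opb_conj ZD) (unfold G_def, rule egorov[OF gg])
  qed
  have o2: "opb n (phi n p {1..l} V - G) (D + Lg * cE / real n + real l * (2 * K) / real n)"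
  proof -
    have "opb n (stp {1..l} Z - Sg n (\<lambda>x. sig {1..l} x * g (Tt x))) (D + Lg * cE / real n + real l * (2 * K) / real n)"
      by (rule step_approx[OF _ Z ZD gg]) simp
    then show ?thesis unfolding stp_def V_def G_def sig_all by simp
  qed
  have eq3: "phi n p {1..l} V - V = (phi n p {1..l} V - G) - (V - G)"
    by (rule eq_matI) (use V G in auto)
  have o3: "opb n (phi n p {1..l} V - V) ((D + Lg * cE / real n + real l * (2 * K) / real n) + (D + Lg * cE / real n))"
    unfolding eq3 by (rule opb_minus[OF o2 o1])
  have "(D + Lg * cE / real n + real l * (2 * K) / real n) \<le> Bc * (Lm * ?t - 1) / real n"
    using ineq_b[OF t] npos unfolding D_def Lg_def by (simp add: add_divide_distrib[symmetric] divide_right_mono)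
  moreover have "0 \<le> Lg * cE / real n" unfolding Lg_def using t KlcE Kpos by simp
  moreover have "0 \<le> real l * (2 * K) / real n" using Kpos by simp
  moreover have "Bc * (Lm * ?t - 1) / real n \<le> Bc * Lm ^ Suc (j + m) / real n"
    using KlcE npos by (intro divide_right_mono mult_left_mono) auto
  moreover have "2 * Bc * Lm ^ Suc (j + m) / real n = 2 * (Bc * Lm ^ Suc (j + m) / real n)" by simp
  moreover have "\<And>a b c R' R T :: real. a + b + c \<le> R' \<Longrightarrow> 0 \<le> b \<Longrightarrow> 0 \<le> c \<Longrightarrow> R' \<le> R \<Longrightarrow> T = 2 * R \<Longrightarrow> (a + b + c) + (a + b) \<le> T"
    by linarith
  ultimately have cb: "(D + Lg * cE / real n + real l * (2 * K) / real n) + (D + Lg * cE / real n) \<le> 2 * Bc * Lm ^ Suc (j + m) / real n"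
    by blast
  have "cmod (qf \<psi> (phi n p {1..l} V) - qf \<psi> V) \<le> ((D + Lg * cE / real n + real l * (2 * K) / real n) + (D + Lg * cE / real n)) * (vn \<psi>)^2"
    by (rule qf_diff[OF o3 psi]) (use V in auto)
  also have "(vn \<psi>)^2 = 1" using nrm by (simp add: vn_sq)
  finally have q: "cmod (qf \<psi> (phi n p {1..l} V) - qf \<psi> Z) \<le> 2 * Bc * Lm ^ Suc (j + m) / real n"
    using cb qf_eig[OF Z] unfolding V_def by simp
  have "\<bar>mu_hat_pull l n U chi \<psi> (Suc j) e - mu_hat_pull l n U chi \<psi> j e\<bar> = \<bar>Re (qf \<psi> (phi n p {1..l} V) - qf \<psi> Z)\<bar>"
    unfolding pull_Re WZ WZ' by simp
  also have "\<dots> \<le> cmod (qf \<psi> (phi n p {1..l} V) - qf \<psi> Z)" by (rule abs_Re_le_cmod)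
  finally show ?thesis using q by linarith
qed

end
end


context fctx begin

context
  fixes \<psi> :: "complex vec" and \<mu> :: complex
  assumes psi: "\<psi> \<in> carrier_vec n" and nrm: "sqnorm \<psi> = 1" and eig: "U *\<^sub>v \<psi> = \<mu> \<cdot>\<^sub>v \<psi>"
begin

definition "eta = real l * (2 * K / real n)"

lemma Gs_bounds: "(1 - eta) * Gs l e j \<psi> \<le> Gs l e (Suc j) \<psi> \<and> Gs l e (Suc j) \<psi> \<le> Gs l e j \<psi>"
proof -
  define y where "y w = Uh *\<^sub>v (mat_adjoint (Pword n U chi (w @ e)) *\<^sub>v (U *\<^sub>v \<psi>))" for w
  have y: "y w \<in> carrier_vec n" for w unfolding y_def using psi by simp
  have sy: "sqnorm (y w) = sqnorm (mat_adjoint (Pword n U chi (w @ e)) *\<^sub>v \<psi>)" for w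
  proof -
    have "sqnorm (y w) = sqnorm (mat_adjoint (Pword n U chi (w @ e)) *\<^sub>v (U *\<^sub>v \<psi>))"
      unfolding y_def by (rule unitary_norm[OF unitary_Uh]) (use psi in simp)
    also have "\<dots> = sqnorm (mat_adjoint (Pword n U chi (w @ e)) *\<^sub>v \<psi>)"
      by (rule sqnorm_eig[OF psi nrm eig]) simp
    finally show ?thesis .
  qed
  have GS: "Gs l e (Suc j) \<psi> = (\<Sum>w\<in>words l j. \<Sum>a\<in>{1..l}. sqnorm (Pd n p a *\<^sub>v y w))"
    unfolding Gs_Suc[OF psi] y_def ..
  have up: "(\<Sum>a\<in>{1..l}. sqnorm (Pd n p a *\<^sub>v y w)) \<le> sqnorm (y w)" for w
    by (rule sqnorm_Pd_sum[OF y]) (use p_sq_sum[OF npos] in auto)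
  have lo: "(1 - eta) * sqnorm (y w) \<le> (\<Sum>a\<in>{1..l}. sqnorm (Pd n p a *\<^sub>v y w))" for w
  proof -
    have "(1 - eta) * sqnorm (y w) = (\<Sum>i<n. (1 - eta) * (cmod (y w $ i))^2)"
      unfolding sqnorm_def using y[of w] by (simp add: sum_distrib_left)
    also have "\<dots> \<le> (\<Sum>i<n. (\<Sum>a\<in>{1..l}. (p a i)^2) * (cmod (y w $ i))^2)"
      using p_sq_lower[OF npos] unfolding eta_def by (intro sum_mono mult_right_mono) auto
    also have "\<dots> = (\<Sum>a\<in>{1..l}. sqnorm (Pd n p a *\<^sub>v y w))" by (rule sum_Pd_eq[OF y, symmetric])
    finally show ?thesis .
  qed
  have G0: "Gs l e j \<psi> = (\<Sum>w\<in>words l j. sqnorm (y w))" unfolding Gs_def sy ..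
  have "Gs l e (Suc j) \<psi> \<le> Gs l e j \<psi>" unfolding GS G0 by (intro sum_mono up)
  moreover have "(1 - eta) * Gs l e j \<psi> \<le> Gs l e (Suc j) \<psi>"
    unfolding GS G0 sum_distrib_left by (intro sum_mono lo)
  ultimately show ?thesis by simp
qed

lemma Gs_nonneg: "0 \<le> Gs l e j \<psi>" unfolding Gs_def by (auto intro: sum_nonneg)

lemma Gs_le1: assumes e: "e \<in> words l m" shows "Gs l e j \<psi> \<le> 1"
proof (induction j)
  case 0
  have o: "opb n (mat_adjoint (Pword n U chi e)) 1"
    by (intro opb_adj opb_Pword) (use e p_le1 in \<open>auto simp: words_def\<close>)
  have "vn (mat_adjoint (Pword n U chi e) *\<^sub>v \<psi>) \<le> 1 * vn \<psi>" by (rule opbD[OF o psi])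
  then have "vn (mat_adjoint (Pword n U chi e) *\<^sub>v \<psi>) \<le> 1" using nrm by (simp add: vn_def)
  then have "sqnorm (mat_adjoint (Pword n U chi e) *\<^sub>v \<psi>) \<le> 1" unfolding vn_def by simp
  then show ?case unfolding Gs_def by (simp add: words_0)
next
  case (Suc j) then show ?case using Gs_bounds[of e j] by linarith
qed

lemma step_star: assumes e: "e \<in> words l m"
  shows "\<bar>Gs l e (Suc j) \<psi> - Gs l e j \<psi>\<bar> \<le> eta"
proof -
  have eta: "0 \<le> eta" unfolding eta_def using Kpos by simp
  have "eta * Gs l e j \<psi> \<le> eta * 1" using Gs_le1[OF e] eta by (intro mult_left_mono) auto
  then show ?thesis using Gs_bounds[of e j] Gs_nonneg[of e j] by (simp add: algebra_simps abs_if)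
qed

lemma main_est: assumes e: "e \<in> words l m" and r: "1 \<le> r"
  shows "\<bar>mu_hat n U chi \<psi> e - mu_hat_pull l n U chi \<psi> r e\<bar> \<le> real r * (4 * Bc + 2 * K * real l) * Lm ^ (m + r) / real n"
    and "\<bar>mu_hat_star n U chi \<psi> e - mu_hat_star_pull l n U chi \<psi> r e\<bar> \<le> real r * (4 * Bc + 2 * K * real l) * Lm ^ (m + r) / real n"
proof -
  have Lp: "1 \<le> Lm ^ (m + r)" using Lm_ge2 by (simp add: one_le_power)
  have C0: "0 \<le> 4 * Bc + 2 * K * real l" using KlcE Kpos by simp
  have big: "real r * (4 * Bc + 2 * K * real l) * Lm ^ (m + r) / real n \<ge> 4 * Bc * Lm ^ (m + r) / real n + real r * (2 * K * real l) / real n"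
  proof -
    have "1 * (4 * Bc) \<le> real r * (4 * Bc)" by (rule mult_right_mono) (use r KlcE in auto)
    then have "4 * Bc * Lm ^ (m + r) \<le> real r * (4 * Bc) * Lm ^ (m + r)"
      using Lp by (intro mult_right_mono) auto
    moreover have "real r * (2 * K * real l) \<le> real r * (2 * K * real l) * Lm ^ (m + r)"
    proof -
      have "0 \<le> real r * (2 * K * real l)" using Kpos by simp
      then have "real r * (2 * K * real l) * 1 \<le> real r * (2 * K * real l) * Lm ^ (m + r)"
        using Lp by (intro mult_left_mono) auto
      then show ?thesis by simp
    qed
    ultimately have "4 * Bc * Lm ^ (m + r) + real r * (2 * K * real l) \<le> real r * (4 * Bc + 2 * K * real l) * Lm ^ (m + r)"
      by (simp add: algebra_simps)
    then show ?thesis using npos by (simp add: add_divide_distrib[symmetric] divide_right_mono)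
  qed
  let ?f = "\<lambda>j. mu_hat_pull l n U chi \<psi> j e"
  have "\<bar>?f 0 - ?f r\<bar> \<le> (\<Sum>j<r. \<bar>?f (Suc j) - ?f j\<bar>)" by (rule tele_sum)
  also have "\<dots> \<le> (\<Sum>j<r. 2 * Bc * Lm ^ Suc (j + m) / real n)"
    by (intro sum_mono step_nonstar[OF psi nrm eig e])
  also have "\<dots> = (2 * Bc / real n) * (\<Sum>j<r. Lm ^ Suc (j + m))" by (simp add: sum_distrib_left)
  also have "\<dots> \<le> (2 * Bc / real n) * (2 * Lm ^ (r + m))"
    using KlcE by (intro mult_left_mono geom_sum Lm_ge2) auto
  also have "\<dots> = 4 * Bc * Lm ^ (m + r) / real n" by (simp add: add.commute)
  finally have A1: "\<bar>?f 0 - ?f r\<bar> \<le> 4 * Bc * Lm ^ (m + r) / real n" .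
  have Y: "0 \<le> real r * (2 * K * real l) / real n" using Kpos by simp
  show "\<bar>mu_hat n U chi \<psi> e - mu_hat_pull l n U chi \<psi> r e\<bar> \<le> real r * (4 * Bc + 2 * K * real l) * Lm ^ (m + r) / real n"
    using A1 Y big unfolding pull0[OF psi nrm eig, symmetric] by linarith
  let ?g = "\<lambda>j. Gs l e j \<psi>"
  have "\<bar>?g 0 - ?g r\<bar> \<le> (\<Sum>j<r. \<bar>?g (Suc j) - ?g j\<bar>)" by (rule tele_sum)
  also have "\<dots> \<le> (\<Sum>j<r. eta)" by (intro sum_mono step_star[OF e])
  also have "\<dots> = real r * (2 * K * real l) / real n" unfolding eta_def by (simp add: mult_ac)
  finally have B1: "\<bar>?g 0 - ?g r\<bar> \<le> real r * (2 * K * real l) / real n" .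
  have "mu_hat_star n U chi \<psi> e = ?g 0" unfolding mu_hat_star_def Gs_def by (simp add: words_0)
  have "mu_hat_star_pull l n U chi \<psi> r e = ?g r" unfolding mu_hat_star_pull_def mu_hat_star_def Gs_def ..
  show "\<bar>mu_hat_star n U chi \<psi> e - mu_hat_star_pull l n U chi \<psi> r e\<bar> \<le> real r * (4 * Bc + 2 * K * real l) * Lm ^ (m + r) / real n"
  proof -
    have X: "0 \<le> 4 * Bc * Lm ^ (m + r) / real n" using KlcE Lp by simp
    show ?thesis using B1 big X
      unfolding \<open>mu_hat_star n U chi \<psi> e = ?g 0\<close> \<open>mu_hat_star_pull l n U chi \<psi> r e = ?g r\<close> by linarith
  qed
qed

end
end


lemma Ndvd: assumes q: "quantization T l \<Lambda> N U" and k: "1 \<le> k" shows "N 1 dvd N k"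
  using k
proof (induction k)
  case 0 then show ?case by simp
next
  case (Suc k)
  show ?case
  proof (cases "k = 0")
    case True then show ?thesis by simp
  next
    case False
    then have "N 1 dvd N k" using Suc by simp
    moreover have "N k dvd N (Suc k)" using q False unfolding quantization_def by auto
    ultimately show ?thesis by (rule dvd_trans)
  qed
qed

theorem lemma3:
  fixes T :: "real \<Rightarrow> real" and l :: nat and \<Lambda> :: "nat \<Rightarrow> nat"
    and N :: "nat \<Rightarrow> nat" and U :: "nat \<Rightarrow> complex mat"
    and \<delta> :: real and chi :: "nat \<Rightarrow> real \<Rightarrow> real"
  assumes "condition1 T l \<Lambda>"
    and "quantization T l \<Lambda> N U"
    and "smoothed_partition l \<Lambda> \<delta> chi"
  shows "\<forall>m. \<exists>C::real. \<forall>k\<ge>1. \<forall>\<psi> \<mu>. \<forall>\<epsilon>\<in>words l m. \<forall>n\<ge>1.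
     (\<psi> \<in> carrier_vec (N k) \<and> sqnorm \<psi> = 1 \<and> U k *\<^sub>v \<psi> = \<mu> \<cdot>\<^sub>v \<psi>) \<longrightarrow>
       \<bar>mu_hat (N k) (U k) chi \<psi> \<epsilon> - mu_hat_pull l (N k) (U k) chi \<psi> n \<epsilon>\<bar>
          \<le> real n * C * real (Lambda_max l \<Lambda>) ^ (m + n) / real (N k) \<and>
       \<bar>mu_hat_star (N k) (U k) chi \<psi> \<epsilon> - mu_hat_star_pull l (N k) (U k) chi \<psi> n \<epsilon>\<bar>
          \<le> real n * C * real (Lambda_max l \<Lambda>) ^ (m + n) / real (N k)"
proof -
  note c1 = assms(1) and q = assms(2) and sp = assms(3)
  have "\<forall>i\<in>{1..l}. \<exists>L. \<forall>x y. \<bar>chi i x - chi i y\<bar> \<le> L * \<bar>x - y\<bar>"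
    using sp unfolding smoothed_partition_def by blast
  then obtain Lf where Lf: "\<And>i x y. i \<in> {1..l} \<Longrightarrow> \<bar>chi i x - chi i y\<bar> \<le> Lf i * \<bar>x - y\<bar>"
    by metis
  define K where "K = 1 + (\<Sum>i\<in>{1..l}. \<bar>Lf i\<bar>)"
  have Kpos: "K > 0" unfolding K_def by (simp add: add_pos_nonneg sum_nonneg)
  have lip: "\<bar>chi a x - chi a y\<bar> \<le> K * \<bar>x - y\<bar>" if a: "a \<in> {1..l}" for a x y
  proof -
    have "\<bar>Lf a\<bar> \<le> (\<Sum>i\<in>{1..l}. \<bar>Lf i\<bar>)" using a by (intro member_le_sum) auto
    then have "Lf a \<le> K" unfolding K_def by linarith
    then show ?thesis using Lf[OF a, of x y] by (meson abs_ge_zero mult_right_mono order_trans)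
  qed
  have sum1: "(\<Sum>a\<in>{1..l}. (chi a x)^2) = 1" for x using sp unfolding smoothed_partition_def by blast
  have per: "chi a (x + 1) = chi a x" if "a \<in> {1..l}" for a x using sp that unfolding smoothed_partition_def by blast
  have F: "fctx T l \<Lambda> (N k) (U k) chi K" if k: "1 \<le> k" for k
  proof unfold_locales
    show "condition1 T l \<Lambda>" by (rule c1)
    have u: "unitary_mat (N k) (U k)" using q k unfolding quantization_def by auto
    then show "U k \<in> carrier_mat (N k) (N k)" "mat_adjoint (U k) * U k = 1\<^sub>m (N k)"
      "U k * mat_adjoint (U k) = 1\<^sub>m (N k)" unfolding unitary_mat_def by auto
    show Nk: "0 < N k" using q k unfolding quantization_def by auto
    have N1: "0 < N 1" using q unfolding quantization_def by auto
    obtain d where d: "N k = N 1 * d" using Ndvd[OF q k] by (auto elim: dvdE)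
    have dpos: "0 < d" using Nk d by (cases d) auto
    have conv: "real i / real (N 1) = real (i * d) / real (N k)" for i
      using N1 dpos unfolding d by (simp add: divide_simps)
    fix a assume a: "a \<in> {1..l}"
    from q a obtain i1 i2 where i12: "beta_lo \<Lambda> a = real i1 / real (N 1)" "beta_hi \<Lambda> a = real i2 / real (N 1)"
      unfolding quantization_def by blast
    show "(\<exists>q. beta_lo \<Lambda> a = real q / real (N k)) \<and> (\<exists>q. beta_hi \<Lambda> a = real q / real (N k))"
      using i12 conv[of i1] conv[of i2] by metis
  next
    fix i j assume "i < N k" "j < N k"
    then show "(cmod (U k $$ (i, j)))\<^sup>2 = measure lebesgue (cell (N k) j \<inter> T -` cell (N k) i) / (1 / real (N k))"
      using q k unfolding quantization_def by blast
  qed (use Kpos lip sum1 per in auto)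
  define Lm0 where "Lm0 = real (Lambda_max l \<Lambda>)"
  define C0 where "C0 = 4 * (2 * K * real l * ((Lm0 + 1) * (Lm0 + 2) / 2) + 2 * K * real l) + 2 * K * real l"
  show ?thesis
  proof (intro allI exI[of _ C0] impI ballI)
    fix m k n :: nat and \<psi> :: "complex vec" and \<mu> :: complex and \<epsilon> :: "nat list"
    assume k: "1 \<le> k" and e: "\<epsilon> \<in> words l m" and n: "1 \<le> n"
      and h: "\<psi> \<in> carrier_vec (N k) \<and> sqnorm \<psi> = 1 \<and> U k *\<^sub>v \<psi> = \<mu> \<cdot>\<^sub>v \<psi>"
    interpret Fk: fctx T l \<Lambda> "N k" "U k" chi K by (rule F[OF k])
    have CC: "4 * Fk.Bc + 2 * K * real l = C0" and LL: "Fk.Lm = Lm0"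
      unfolding Fk.Bc_def Fk.cE_def Fk.Lm_def C0_def Lm0_def by simp_all
    note est = Fk.main_est[OF conjunct1[OF h] conjunct1[OF conjunct2[OF h]] conjunct2[OF conjunct2[OF h]] e n]
    show "\<bar>mu_hat (N k) (U k) chi \<psi> \<epsilon> - mu_hat_pull l (N k) (U k) chi \<psi> n \<epsilon>\<bar>
          \<le> real n * C0 * real (Lambda_max l \<Lambda>) ^ (m + n) / real (N k) \<and>
       \<bar>mu_hat_star (N k) (U k) chi \<psi> \<epsilon> - mu_hat_star_pull l (N k) (U k) chi \<psi> n \<epsilon>\<bar>
          \<le> real n * C0 * real (Lambda_max l \<Lambda>) ^ (m + n) / real (N k)"
      using est unfolding CC LL Lm0_def by simp
  qed
qed


end
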